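(* Let $K$ be a finitely generated field with $\mathrm{char}(K)\neq2$ and $d:=\dim(K)>2$, let $k_0\subset K$ be a relatively algebraically closed global subfield, $e:=\mathrm{td}(K|k_0)-1>0$, and let $f,t_1,\dots,t_e\in K$ be algebraically independent over $k_0$ with each $t_i$ a square in $K$. Let $C$ be the projective normal curve over $k_0(t_1,\dots,t_e)$ with function field $K$, $D_f:=\{P\in C\text{ closed}\mid v_P(f)\notin 2\,v_P(K)\}$, $\Theta_{f,\mathbf t}:=\bigcup_{P\in D_f}U_P\cdot K^{\times2}$ and $\bar\Theta_{f,\mathbf t}:=\{\xi\in K^\times\mid \tfrac1\xi\notin\Theta_{f,\mathbf t}\text{ and }\tfrac1\xi-1\notin\Theta_{f,\mathbf t}\}$. Then $\mathfrak a_{f,\mathbf t}:=\bigcap_{P\in D_f}\mathfrak m_P=\bar\Theta_{f,\mathbf t}-\bar\Theta_{f,\mathbf t}$. Hence $\mathfrak a_{f,\mathbf t}\subset K$ is uniformly first-order definable, and thus so is the subring $R_{f,\mathbf t}=\bigcap_{P\in D_f}\mathcal O_P=\{r\in K\mid r\cdot\mathfrak a_{f,\mathbf t}\subset\mathfrak a_{f,\mathbf t}\}$ of $K$.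
   Context: Kronecker dimension $\dim$ = $\dim$ of prime field ($0$ for $\mathbb F_p$, $1$ for $\mathbb Q$) plus transcendence degree over it. For closed $P\in C$, $v_P$ is the discrete valuation with valuation ring $\mathcal O_P=\mathcal O_{C,P}$, maximal ideal $\mathfrak m_P$, and $U_P=\mathcal O_P^\times$. $A-B$ denotes $\{a-b\mid a\in A,b\in B\}$. Uniformly first-order definable means definable by a formula in the language of fields not depending on $K$, with $f,t_1,\dots,t_e$ (and the subfield $k_0$) as the given data. *)

theory Defs
  imports Main "HOL-Computational_Algebra.Polynomial"
begin

text \<open>Throughout, the ambient field K is the whole type 'a :: field.\<close>

definition subfield :: "'a::field set \<Rightarrow> bool" where
  "subfield S \<longleftrightarrow> 0 \<in> S \<and> 1 \<in> S \<and>
     (\<forall>x\<in>S. \<forall>y\<in>S. x + y \<in> S \<and> x * y \<in> S) \<and>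
     (\<forall>x\<in>S. - x \<in> S \<and> inverse x \<in> S)"

definition gen_subfield :: "'a::field set \<Rightarrow> 'a set" where
  "gen_subfield S = \<Inter>{F. subfield F \<and> S \<subseteq> F}"

definition prime_subfield :: "'a::field set" where
  "prime_subfield = gen_subfield {}"

definition fg_field :: "'a::field set \<Rightarrow> bool" where
  "fg_field L \<longleftrightarrow> subfield L \<and> (\<exists>S. finite S \<and> gen_subfield S = L)"

text \<open>Algebraic independence of a list over k: no nonzero polynomial with
  coefficients in k (coefficient function on exponent vectors, finite support,
  only variables 0..length xs - 1) vanishes at xs.\<close>
definition alg_indep :: "'a::field set \<Rightarrow> 'a list \<Rightarrow> bool" where
  "alg_indep k xs \<longleftrightarrow>
     (\<forall>c :: (nat \<Rightarrow> nat) \<Rightarrow> 'a.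
        finite {\<alpha>. c \<alpha> \<noteq> 0} \<and> (\<forall>\<alpha>. c \<alpha> \<in> k) \<and>
        (\<forall>\<alpha>. c \<alpha> \<noteq> 0 \<longrightarrow> (\<forall>i\<ge>length xs. \<alpha> i = 0)) \<and>
        (\<Sum>\<alpha>\<in>{\<alpha>. c \<alpha> \<noteq> 0}. c \<alpha> * (\<Prod>i<length xs. (xs ! i) ^ (\<alpha> i))) = 0
        \<longrightarrow> (\<forall>\<alpha>. c \<alpha> = 0))"

definition trdeg_in :: "'a::field set \<Rightarrow> 'a set \<Rightarrow> nat \<Rightarrow> bool" where
  "trdeg_in k L n \<longleftrightarrow>
     (\<exists>xs. set xs \<subseteq> L \<and> length xs = n \<and> alg_indep k xs) \<and>
     \<not> (\<exists>xs. set xs \<subseteq> L \<and> length xs = Suc n \<and> alg_indep k xs)"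

text \<open>Kronecker dimension: dim of prime field (1 for Q, 0 for F_p) plus
  transcendence degree over the prime field.\<close>
definition kdim :: "'a::field set \<Rightarrow> nat \<Rightarrow> bool" where
  "kdim L d \<longleftrightarrow> (\<exists>m. trdeg_in prime_subfield L m \<and>
       d = m + (if CHAR('a) = 0 then 1 else 0))"

definition global_subfield :: "'a::field set \<Rightarrow> bool" where
  "global_subfield k \<longleftrightarrow> fg_field k \<and> kdim k 1"

definition algebraic_over :: "'a::field set \<Rightarrow> 'a \<Rightarrow> bool" where
  "algebraic_over k x \<longleftrightarrow> (\<exists>p :: 'a poly. p \<noteq> 0 \<and> (\<forall>i. coeff p i \<in> k) \<and> poly p x = 0)"

definition rel_alg_closed :: "'a::field set \<Rightarrow> bool" where
  "rel_alg_closed k \<longleftrightarrow> (\<forall>x. algebraic_over k x \<longrightarrow> x \<in> k)"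

definition valuation_ring :: "'a::field set \<Rightarrow> bool" where
  "valuation_ring V \<longleftrightarrow> 0 \<in> V \<and> 1 \<in> V \<and>
     (\<forall>x\<in>V. \<forall>y\<in>V. x + y \<in> V \<and> x * y \<in> V \<and> - x \<in> V) \<and>
     (\<forall>x. x \<noteq> 0 \<longrightarrow> x \<in> V \<or> inverse x \<in> V)"

text \<open>Closed points of the projective normal curve over F with function field K
  correspond to the valuation rings O_P of K containing F and different from K.\<close>
definition curve_points :: "'a::field set \<Rightarrow> 'a set set" where
  "curve_points F = {V. valuation_ring V \<and> F \<subseteq> V \<and> V \<noteq> UNIV}"

definition vr_units :: "'a::field set \<Rightarrow> 'a set" where
  "vr_units V = {x \<in> V. x \<noteq> 0 \<and> inverse x \<in> V}"

definition max_ideal :: "'a::field set \<Rightarrow> 'a set" where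
  "max_ideal V = V - vr_units V"

definition unit_squares :: "'a::field set \<Rightarrow> 'a set" where
  "unit_squares V = {u * g ^ 2 | u g. u \<in> vr_units V \<and> g \<noteq> 0}"

text \<open>v_P(f) in 2 v_P(K^x) iff f = u g^2 with u a unit, g nonzero.\<close>
definition val_even :: "'a::field set \<Rightarrow> 'a \<Rightarrow> bool" where
  "val_even V f \<longleftrightarrow> (\<exists>g. g \<noteq> 0 \<and> f * inverse (g ^ 2) \<in> vr_units V)"

definition Dset :: "'a::field set \<Rightarrow> 'a \<Rightarrow> 'a set set" where
  "Dset F f = {V \<in> curve_points F. \<not> val_even V f}"

definition Theta :: "'a::field set \<Rightarrow> 'a \<Rightarrow> 'a set" where
  "Theta F f = (\<Union>V\<in>Dset F f. unit_squares V)"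

definition Theta_bar :: "'a::field set \<Rightarrow> 'a \<Rightarrow> 'a set" where
  "Theta_bar F f = {\<xi>. \<xi> \<noteq> 0 \<and> inverse \<xi> \<notin> Theta F f \<and> inverse \<xi> - 1 \<notin> Theta F f}"

definition ideal_a :: "'a::field set \<Rightarrow> 'a \<Rightarrow> 'a set" where
  "ideal_a F f = (\<Inter>V\<in>Dset F f. max_ideal V)"

definition ring_R :: "'a::field set \<Rightarrow> 'a \<Rightarrow> 'a set" where
  "ring_R F f = (\<Inter>V\<in>Dset F f. V)"

definition set_diff :: "'a::ab_group_add set \<Rightarrow> 'a set \<Rightarrow> 'a set" where
  "set_diff A B = {a - b | a b. a \<in> A \<and> b \<in> B}"

end

theory Submission
  imports Defs
begin

lemma subfield_0: "subfield S \<Longrightarrow> 0 \<in> S" by (simp add: subfield_def)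
lemma subfield_1: "subfield S \<Longrightarrow> 1 \<in> S" by (simp add: subfield_def)
lemma subfield_add: "subfield S \<Longrightarrow> x \<in> S \<Longrightarrow> y \<in> S \<Longrightarrow> x + y \<in> S" by (simp add: subfield_def)
lemma subfield_mult: "subfield S \<Longrightarrow> x \<in> S \<Longrightarrow> y \<in> S \<Longrightarrow> x * y \<in> S" by (simp add: subfield_def)
lemma subfield_uminus: "subfield S \<Longrightarrow> x \<in> S \<Longrightarrow> - x \<in> S" by (simp add: subfield_def)
lemma subfield_inverse: "subfield S \<Longrightarrow> x \<in> S \<Longrightarrow> inverse x \<in> S" by (simp add: subfield_def)
lemma subfield_diff: "subfield S \<Longrightarrow> x \<in> S \<Longrightarrow> y \<in> S \<Longrightarrow> x - y \<in> S"
  using subfield_add[of S x "-y"] subfield_uminus[of S y] by simp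
lemma subfield_divide: "subfield S \<Longrightarrow> x \<in> S \<Longrightarrow> y \<in> S \<Longrightarrow> x / y \<in> S"
  by (simp add: divide_inverse subfield_mult subfield_inverse)
lemma subfield_power: "subfield S \<Longrightarrow> x \<in> S \<Longrightarrow> x ^ n \<in> S"
  by (induction n) (auto simp: subfield_1 subfield_mult)
lemma subfield_sum: "subfield S \<Longrightarrow> (\<And>i. i \<in> A \<Longrightarrow> g i \<in> S) \<Longrightarrow> sum g A \<in> S"
  by (induction A rule: infinite_finite_induct) (auto simp: subfield_0 subfield_add)
lemma subfield_prod: "subfield S \<Longrightarrow> (\<And>i. i \<in> A \<Longrightarrow> g i \<in> S) \<Longrightarrow> prod g A \<in> S"
  by (induction A rule: infinite_finite_induct) (auto simp: subfield_1 subfield_mult)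

lemma subfield_gen_subfield: "subfield (gen_subfield S)"
  unfolding gen_subfield_def subfield_def by auto

lemma gen_subfield_sup: "S \<subseteq> gen_subfield S"
  unfolding gen_subfield_def by auto

lemma gen_subfield_least: "subfield T \<Longrightarrow> S \<subseteq> T \<Longrightarrow> gen_subfield S \<subseteq> T"
  unfolding gen_subfield_def by auto

context
  fixes V :: "'a::field set"
  assumes vr: "valuation_ring V"
begin

lemma vr_0: "0 \<in> V" using vr by (simp add: valuation_ring_def)
lemma vr_1: "1 \<in> V" using vr by (simp add: valuation_ring_def)
lemma vr_add: "x \<in> V \<Longrightarrow> y \<in> V \<Longrightarrow> x + y \<in> V" using vr by (simp add: valuation_ring_def)
lemma vr_mult: "x \<in> V \<Longrightarrow> y \<in> V \<Longrightarrow> x * y \<in> V" using vr by (simp add: valuation_ring_def)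
lemma vr_uminus: "x \<in> V \<Longrightarrow> - x \<in> V" using vr by (simp add: valuation_ring_def)
lemma vr_diff: "x \<in> V \<Longrightarrow> y \<in> V \<Longrightarrow> x - y \<in> V"
  using vr_add[of x "-y"] vr_uminus[of y] by simp
lemma vr_total: "x \<noteq> 0 \<Longrightarrow> x \<in> V \<or> inverse x \<in> V" using vr by (simp add: valuation_ring_def)
lemma vr_power: "x \<in> V \<Longrightarrow> x ^ n \<in> V"
  by (induction n) (auto simp: vr_1 vr_mult)
lemma vr_sum: "(\<And>i. i \<in> A \<Longrightarrow> g i \<in> V) \<Longrightarrow> sum g A \<in> V"
  by (induction A rule: infinite_finite_induct) (auto simp: vr_0 vr_add)

lemma vr_root: assumes "x ^ N \<in> V" "N > 0" shows "x \<in> V"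
proof (rule ccontr)
  assume n: "x \<notin> V"
  then have "x \<noteq> 0" using vr_0 by auto
  then have i: "inverse x \<in> V" using vr_total n by auto
  obtain M where M: "N = Suc M" using \<open>N > 0\<close> gr0_implies_Suc by blast
  have "x ^ N * inverse x ^ (N - 1) = x * (x ^ M * inverse (x ^ M))"
    by (simp add: M power_inverse)
  also have "\<dots> = x" using \<open>x \<noteq> 0\<close> by simp
  finally have "x = x ^ N * inverse x ^ (N - 1)" by simp
  then have "x \<in> V" using assms vr_mult vr_power i by metis
  with n show False by simp
qed

lemma units_iff: "u \<in> vr_units V \<longleftrightarrow> u \<in> V \<and> u \<noteq> 0 \<and> inverse u \<in> V"
  by (simp add: vr_units_def)

lemma max_iff: "y \<in> max_ideal V \<longleftrightarrow> y \<in> V \<and> (y = 0 \<or> inverse y \<notin> V)"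
  by (auto simp: max_ideal_def vr_units_def)

lemma units_mult: "u \<in> vr_units V \<Longrightarrow> w \<in> vr_units V \<Longrightarrow> u * w \<in> vr_units V"
  by (auto simp: units_iff vr_mult)
lemma units_inverse: "u \<in> vr_units V \<Longrightarrow> inverse u \<in> vr_units V"
  by (auto simp: units_iff)
lemma units_divide: "u \<in> vr_units V \<Longrightarrow> w \<in> vr_units V \<Longrightarrow> u / w \<in> vr_units V"
  by (simp add: divide_inverse units_mult units_inverse)
lemma units_power: "u \<in> vr_units V \<Longrightarrow> u ^ n \<in> vr_units V"
  by (induction n) (auto simp: units_iff vr_1 vr_mult power_inverse[symmetric] vr_power)
lemma units_1: "1 \<in> vr_units V" by (simp add: units_iff vr_1)
lemma units_uminus: "u \<in> vr_units V \<Longrightarrow> - u \<in> vr_units V"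
  by (auto simp: units_iff vr_uminus)
lemma units_nz: "u \<in> vr_units V \<Longrightarrow> u \<noteq> 0" by (simp add: units_iff)
lemma units_in: "u \<in> vr_units V \<Longrightarrow> u \<in> V" by (simp add: units_iff)

lemma units_cancel: "u * w \<in> vr_units V \<Longrightarrow> w \<in> vr_units V \<Longrightarrow> u \<in> vr_units V"
proof -
  assume a: "u * w \<in> vr_units V" "w \<in> vr_units V"
  have "u = (u * w) * inverse w" using a(2) by (simp add: units_iff)
  then show ?thesis using a units_mult units_inverse by metis
qed

lemma max_add: assumes "y \<in> max_ideal V" "z \<in> max_ideal V" shows "y + z \<in> max_ideal V"
proof -
  have yz: "y \<in> V" "z \<in> V" using assms max_iff by auto
  show ?thesis
  proof (rule ccontr)
    assume "y + z \<notin> max_ideal V"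
    then have s: "y + z \<noteq> 0" "inverse (y + z) \<in> V" using vr_add yz max_iff by auto
    have "y \<noteq> 0 \<or> z \<noteq> 0" using s by auto
    then show False
    proof
      assume y0: "y \<noteq> 0"
      show False
      proof (cases "z / y \<in> V")
        case True
        have "inverse y = (1 + z / y) * inverse (y + z)" using y0 s
          by (simp add: field_simps)
        then have "inverse y \<in> V" using True s vr_1 vr_add vr_mult by metis
        then show False using assms(1) y0 max_iff by auto
      next
        case False
        then have z0: "z \<noteq> 0" using vr_0 by auto
        have "inverse (z/y) \<in> V" using vr_total[of "z/y"] False z0 y0 by auto
        then have yz': "y / z \<in> V" by simp
        have "inverse z = (1 + y / z) * inverse (y + z)" using z0 s
          by (simp add: field_simps)
        then have "inverse z \<in> V" using yz' s vr_1 vr_add vr_mult by metis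
        then show False using assms(2) z0 max_iff by auto
      qed
    next
      assume z0: "z \<noteq> 0"
      show False
      proof (cases "y / z \<in> V")
        case True
        have "inverse z = (1 + y / z) * inverse (y + z)" using z0 s
          by (simp add: field_simps)
        then have "inverse z \<in> V" using True s vr_1 vr_add vr_mult by metis
        then show False using assms(2) z0 max_iff by auto
      next
        case False
        then have y0: "y \<noteq> 0" using vr_0 by auto
        have "inverse (y/z) \<in> V" using vr_total[of "y/z"] False z0 y0 by auto
        then have yz': "z / y \<in> V" by simp
        have "inverse y = (1 + z / y) * inverse (y + z)" using y0 s
          by (simp add: field_simps)
        then have "inverse y \<in> V" using yz' s vr_1 vr_add vr_mult by metis
        then show False using assms(1) y0 max_iff by auto
      qed
    qed
  qed
qed

lemma max_mult: assumes "r \<in> V" "y \<in> max_ideal V" shows "r * y \<in> max_ideal V"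
proof -
  have "r * y \<in> V" using assms max_iff vr_mult by auto
  moreover have "r * y = 0 \<or> inverse (r * y) \<notin> V"
  proof (rule ccontr)
    assume "\<not> ?thesis"
    then have "r * y \<noteq> 0" "inverse (r * y) \<in> V" by auto
    then have "inverse y = r * inverse (r * y)" by (simp add: field_simps)
    then have "inverse y \<in> V" using assms vr_mult \<open>inverse (r * y) \<in> V\<close> by metis
    then show False using assms \<open>r * y \<noteq> 0\<close> max_iff by auto
  qed
  ultimately show ?thesis using max_iff by auto
qed

lemma max_uminus: "y \<in> max_ideal V \<Longrightarrow> - y \<in> max_ideal V"
  using max_mult[of "-1" y] vr_1 vr_uminus by auto

lemma max_diff: "y \<in> max_ideal V \<Longrightarrow> z \<in> max_ideal V \<Longrightarrow> y - z \<in> max_ideal V"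
  using max_add[of y "-z"] max_uminus by auto

lemma max_0: "0 \<in> max_ideal V" by (simp add: max_iff vr_0)

lemma max_sum: "(\<And>i. i \<in> A \<Longrightarrow> g i \<in> max_ideal V) \<Longrightarrow> sum g A \<in> max_ideal V"
  by (induction A rule: infinite_finite_induct) (auto simp: max_0 max_add)

lemma max_not_unit: "y \<in> max_ideal V \<Longrightarrow> y \<notin> vr_units V"
  by (auto simp: max_iff units_iff)

lemma in_V_cases: "y \<in> V \<Longrightarrow> y \<in> vr_units V \<or> y \<in> max_ideal V"
  by (auto simp: max_iff units_iff)

lemma unit_plus_max: assumes "u \<in> vr_units V" "y \<in> max_ideal V" shows "u + y \<in> vr_units V"
proof (rule ccontr)
  assume n: "u + y \<notin> vr_units V"
  have "u + y \<in> V" using assms units_in max_iff vr_add by auto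
  then have "u + y \<in> max_ideal V" using n in_V_cases by auto
  then have "(u + y) - y \<in> max_ideal V" using max_diff assms by blast
  then have "u \<in> max_ideal V" by simp
  then show False using assms max_not_unit by auto
qed

lemma subfield_units: "subfield F \<Longrightarrow> F \<subseteq> V \<Longrightarrow> c \<in> F \<Longrightarrow> c \<noteq> 0 \<Longrightarrow> c \<in> vr_units V"
  by (auto simp: units_iff subfield_inverse)

lemma units_powi: "u \<in> vr_units V \<Longrightarrow> u powi k \<in> vr_units V"
  by (cases "k \<ge> 0") (auto simp: power_int_def units_power units_inverse)

end

definition Fpoly :: "'a::field set \<Rightarrow> 'a poly \<Rightarrow> bool" where
  "Fpoly F p \<longleftrightarrow> (\<forall>i. coeff p i \<in> F)"

definition A0 :: "'a::field set \<Rightarrow> 'a \<Rightarrow> 'a set" where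
  "A0 F f = {poly p f | p. Fpoly F p}"

lemma Fpoly_pCons: "Fpoly F (pCons a p) \<longleftrightarrow> a \<in> F \<and> Fpoly F p"
  unfolding Fpoly_def apply (rule iffI)
   apply (metis coeff_pCons_0 coeff_pCons_Suc)
  by (simp add: coeff_pCons split: nat.split)

lemma Fpoly_in_V: "valuation_ring V \<Longrightarrow> F \<subseteq> V \<Longrightarrow> Fpoly F q \<Longrightarrow> x \<in> V \<Longrightarrow> poly q x \<in> V"
proof (induction q rule: pCons_induct)
  case 0 then show ?case by (simp add: vr_0)
next
  case (pCons a p)
  then show ?case by (auto simp: Fpoly_pCons vr_add vr_mult)
qed

lemma Fpoly_unit:
  assumes V: "valuation_ring V" "F \<subseteq> V" "subfield F" and q: "Fpoly F q" "coeff q 0 \<noteq> 0"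
    and x: "x \<in> max_ideal V"
  shows "poly q x \<in> vr_units V"
proof -
  obtain c q' where qq: "q = pCons c q'" by (cases q) auto
  have c: "c \<in> F" "c \<noteq> 0" using q qq by (auto simp: Fpoly_pCons)
  have "Fpoly F q'" using q qq by (simp add: Fpoly_pCons)
  then have "poly q' x \<in> V" using Fpoly_in_V V x max_iff by blast
  then have "x * poly q' x \<in> max_ideal V" using max_mult[OF V(1) _ x] by (metis mult.commute)
  moreover have "c \<in> vr_units V" using subfield_units[OF V(1) V(3) V(2)] c by auto
  ultimately have "c + x * poly q' x \<in> vr_units V" using unit_plus_max V(1) by blast
  then show ?thesis using qq by simp
qed

lemma Fpoly_decomp:
  assumes "Fpoly F p" "p \<noteq> 0"
  shows "\<exists>m q. Fpoly F q \<and> coeff q 0 \<noteq> 0 \<and> (\<forall>x. poly p x = x ^ m * poly q x)"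
  using assms
proof (induction p rule: pCons_induct)
  case 0 then show ?case by simp
next
  case (pCons a p)
  show ?case
  proof (cases "a = 0")
    case False
    then show ?thesis using pCons.prems by (intro exI[of _ 0] exI[of _ "pCons a p"]) auto
  next
    case True
    then have "p \<noteq> 0" using pCons.prems by auto
    moreover have "Fpoly F p" using pCons.prems by (simp add: Fpoly_pCons)
    ultimately obtain m q where "Fpoly F q" "coeff q 0 \<noteq> 0" "\<forall>x. poly p x = x ^ m * poly q x"
      using pCons.IH by blast
    then show ?thesis using True by (intro exI[of _ "Suc m"] exI[of _ q]) auto
  qed
qed

lemma Fpoly_reflect: "subfield F \<Longrightarrow> Fpoly F p \<Longrightarrow> Fpoly F (reflect_poly p)"
  unfolding Fpoly_def by (auto simp: coeff_reflect_poly subfield_0)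

lemma Fpoly_add: "subfield F \<Longrightarrow> Fpoly F p \<Longrightarrow> Fpoly F q \<Longrightarrow> Fpoly F (p + q)"
  unfolding Fpoly_def by (auto simp: subfield_add)
lemma Fpoly_uminus: "subfield F \<Longrightarrow> Fpoly F p \<Longrightarrow> Fpoly F (- p)"
  unfolding Fpoly_def by (auto simp: subfield_uminus)
lemma Fpoly_mult: "subfield F \<Longrightarrow> Fpoly F p \<Longrightarrow> Fpoly F q \<Longrightarrow> Fpoly F (p * q)"
  unfolding Fpoly_def by (auto simp: coeff_mult intro!: subfield_sum subfield_mult)
lemma Fpoly_const: "subfield F \<Longrightarrow> c \<in> F \<Longrightarrow> Fpoly F [:c:]"
  unfolding Fpoly_def by (auto simp: coeff_pCons subfield_0 split: nat.splits)
lemma Fpoly_X: "subfield F \<Longrightarrow> Fpoly F [:0,1:]"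
  unfolding Fpoly_def by (auto simp: coeff_pCons subfield_0 subfield_1 split: nat.splits)

lemma A0_I: "Fpoly F p \<Longrightarrow> a = poly p f \<Longrightarrow> a \<in> A0 F f"
  unfolding A0_def by auto
lemma A0_E: "a \<in> A0 F f \<Longrightarrow> (\<And>p. Fpoly F p \<Longrightarrow> a = poly p f \<Longrightarrow> thesis) \<Longrightarrow> thesis"
  unfolding A0_def by auto

lemma A0_add: "subfield F \<Longrightarrow> a \<in> A0 F f \<Longrightarrow> b \<in> A0 F f \<Longrightarrow> a + b \<in> A0 F f"
  by (elim A0_E, rule A0_I[OF Fpoly_add]) auto
lemma A0_mult: "subfield F \<Longrightarrow> a \<in> A0 F f \<Longrightarrow> b \<in> A0 F f \<Longrightarrow> a * b \<in> A0 F f"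
  by (elim A0_E, rule A0_I[OF Fpoly_mult]) auto
lemma A0_uminus: "subfield F \<Longrightarrow> a \<in> A0 F f \<Longrightarrow> - a \<in> A0 F f"
  by (elim A0_E, rule A0_I[OF Fpoly_uminus]) auto
lemma A0_const: "subfield F \<Longrightarrow> c \<in> F \<Longrightarrow> c \<in> A0 F f"
  by (rule A0_I[OF Fpoly_const]) auto
lemma A0_f: "subfield F \<Longrightarrow> f \<in> A0 F f"
  by (rule A0_I[OF Fpoly_X]) auto
lemma A0_sum: "subfield F \<Longrightarrow> (\<And>i. i \<in> I \<Longrightarrow> g i \<in> A0 F f) \<Longrightarrow> sum g I \<in> A0 F f"
  by (induction I rule: infinite_finite_induct) (auto simp: A0_add A0_const subfield_0)
lemma A0_prod: "subfield F \<Longrightarrow> (\<And>i. i \<in> I \<Longrightarrow> g i \<in> A0 F f) \<Longrightarrow> prod g I \<in> A0 F f"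
  by (induction I rule: infinite_finite_induct) (auto simp: A0_mult A0_const subfield_1)
lemma A0_power: "subfield F \<Longrightarrow> a \<in> A0 F f \<Longrightarrow> a ^ n \<in> A0 F f"
  by (induction n) (auto simp: A0_mult A0_const subfield_1)

locale setting =
  fixes F :: "'a::field set" and f :: 'a
  assumes F_sub: "subfield F" and f_nz: "f \<noteq> 0" and f1_nz: "1 + f \<noteq> 0"
    and alg: "\<And>y. \<exists>n P. (\<forall>j\<le>n. P j \<in> A0 F f) \<and> (\<exists>j\<le>n. P j \<noteq> 0) \<and> (\<Sum>j\<le>n. P j * y ^ j) = 0"
    and fg: "\<exists>S::'a set. finite S \<and> gen_subfield S = UNIV"
begin

definition h where "h = f / (1 + f)^2"
definition Dp where "Dp = {V. valuation_ring V \<and> F \<subseteq> V \<and> h \<in> max_ideal V}"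

lemma h_nz: "h \<noteq> 0" using f_nz f1_nz by (simp add: h_def)

lemma DpD: assumes "V \<in> Dp" shows "valuation_ring V" "F \<subseteq> V" "h \<in> max_ideal V"
  using assms by (auto simp: Dp_def)

lemma h_inv_notin: "V \<in> Dp \<Longrightarrow> inverse h \<notin> V"
  using DpD[of V] max_iff h_nz by blast

lemma f_eq: "f = h * (1 + f)^2" using f1_nz by (simp add: h_def)

lemma Dp_0: assumes V: "V \<in> Dp" and fV: "f \<in> V"
  shows "f \<in> max_ideal V" "1 + f \<in> vr_units V" "f / h \<in> vr_units V"
proof -
  note vr = DpD(1)[OF V]
  show fm: "f \<in> max_ideal V"
  proof (rule ccontr)
    assume "f \<notin> max_ideal V"
    then have fu: "f \<in> vr_units V" using in_V_cases[OF vr fV] by auto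
    have "(1 + f)^2 = f * inverse h" using f1_nz h_nz by (simp add: h_def field_simps)
    moreover have "(1 + f)^2 \<in> V" using fV vr_1[OF vr] vr_add[OF vr] vr_power[OF vr] by blast
    ultimately have "f * inverse h \<in> V" by simp
    then have "inverse f * (f * inverse h) \<in> V" using fu units_iff[OF vr] vr_mult[OF vr] by blast
    then have "inverse h \<in> V" using f_nz by (metis mult.assoc mult_1 left_inverse)
    then show False using h_inv_notin V by blast
  qed
  show u: "1 + f \<in> vr_units V" using unit_plus_max[OF vr units_1[OF vr] fm] .
  have "f / h = (1 + f)^2" using f1_nz h_nz f_nz by (simp add: h_def field_simps)
  then show "f / h \<in> vr_units V" using units_power[OF vr u] by simp
qed

lemma Dp_inf: assumes V: "V \<in> Dp" and fV: "f \<notin> V"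
  shows "inverse f \<in> max_ideal V" "f * h \<in> vr_units V"
proof -
  note vr = DpD(1)[OF V]
  have "inverse f \<in> V" using vr_total[OF vr f_nz] fV by auto
  moreover have "inverse (inverse f) \<notin> V" using fV by simp
  ultimately show im: "inverse f \<in> max_ideal V" using max_iff[OF vr] by blast
  have u: "1 + inverse f \<in> vr_units V" using unit_plus_max[OF vr units_1[OF vr] im] .
  have "f * h = inverse ((1 + inverse f)^2)" using f1_nz f_nz
    by (simp add: h_def field_simps power2_eq_square)
  then show "f * h \<in> vr_units V" using units_inverse[OF vr] units_power[OF vr u] by simp
qed

lemma A0_val0: assumes "a \<in> A0 F f" "a \<noteq> 0"
  shows "\<exists>k. \<forall>V\<in>Dp. f \<in> V \<longrightarrow> a * h powi (- k) \<in> vr_units V"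
proof -
  obtain p where p: "Fpoly F p" "a = poly p f" using assms unfolding A0_def by auto
  have "p \<noteq> 0" using p assms by auto
  obtain m q where mq: "Fpoly F q" "coeff q 0 \<noteq> 0" "\<forall>x. poly p x = x ^ m * poly q x"
    using Fpoly_decomp[OF p(1) \<open>p \<noteq> 0\<close>] by blast
  show ?thesis
  proof (intro exI[of _ "int m"] ballI impI)
    fix V assume V: "V \<in> Dp" and fV: "f \<in> V"
    note vr = DpD(1)[OF V]
    have qu: "poly q f \<in> vr_units V"
      using Fpoly_unit[OF vr DpD(2)[OF V] F_sub mq(1) mq(2) Dp_0(1)[OF V fV]] .
    have "a * h powi (- int m) = (f / h) ^ m * poly q f"
      using p(2) mq(3) h_nz by (simp add: power_int_minus power_divide field_simps)
    then show "a * h powi (- int m) \<in> vr_units V"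
      using units_mult[OF vr units_power[OF vr Dp_0(3)[OF V fV]] qu] by simp
  qed
qed

lemma A0_valinf: assumes "a \<in> A0 F f" "a \<noteq> 0"
  shows "\<exists>k. \<forall>V\<in>Dp. f \<notin> V \<longrightarrow> a * h powi (- k) \<in> vr_units V"
proof -
  obtain p where p: "Fpoly F p" "a = poly p f" using assms unfolding A0_def by auto
  have "p \<noteq> 0" using p assms by auto
  let ?q = "reflect_poly p"
  have q: "Fpoly F ?q" "coeff ?q 0 \<noteq> 0"
    using Fpoly_reflect[OF F_sub p(1)] \<open>p \<noteq> 0\<close> by (auto simp: coeff_reflect_poly)
  have pr: "poly ?q (inverse f) = inverse f ^ degree p * poly p f"
    using poly_reflect_poly_nz[of "inverse f" p] f_nz by simp
  show ?thesis
  proof (intro exI[of _ "- int (degree p)"] ballI impI)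
    fix V assume V: "V \<in> Dp" and fV: "f \<notin> V"
    note vr = DpD(1)[OF V]
    have qu: "poly ?q (inverse f) \<in> vr_units V"
      using Fpoly_unit[OF vr DpD(2)[OF V] F_sub q Dp_inf(1)[OF V fV]] .
    have "a * h powi (- (- int (degree p))) = (f * h) ^ degree p * poly ?q (inverse f)"
      using p(2) pr f_nz by (simp add: power_mult_distrib power_inverse field_simps)
    then show "a * h powi (- (- int (degree p))) \<in> vr_units V"
      using units_mult[OF vr units_power[OF vr Dp_inf(2)[OF V fV]] qu] by simp
  qed
qed

lemma A0_val: assumes "a \<in> A0 F f" "a \<noteq> 0" "V \<in> Dp"
  shows "\<exists>k. a * h powi (- k) \<in> vr_units V"
  using A0_val0[OF assms(1,2)] A0_valinf[OF assms(1,2)] assms(3) by blast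

end

lemma min_exists:
  assumes vr: "valuation_ring V" and "finite J" "J \<noteq> {}" "\<forall>j\<in>J. T j \<noteq> 0"
  shows "\<exists>i\<in>J. \<forall>j\<in>J. T j / T i \<in> V"
  using assms(2-4)
proof (induction J rule: finite_ne_induct)
  case (singleton x) then show ?case using vr_1[OF vr] by simp
next
  case (insert x J)
  then obtain i where i: "i \<in> J" "\<forall>j\<in>J. T j / T i \<in> V" by auto
  have nz: "T x \<noteq> 0" "T i \<noteq> 0" using insert i by auto
  show ?case
  proof (cases "T i / T x \<in> V")
    case True
    have "\<forall>j\<in>insert x J. T j / T x \<in> V"
    proof
      fix j assume "j \<in> insert x J"
      then show "T j / T x \<in> V"
      proof
        assume "j = x" then show ?thesis using nz vr_1[OF vr] by simp
      next
        assume "j \<in> J"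
        then have "(T j / T i) * (T i / T x) \<in> V" using i True vr_mult[OF vr] by blast
        then show ?thesis using nz by simp
      qed
    qed
    then show ?thesis by blast
  next
    case False
    then have "inverse (T i / T x) \<in> V" using vr_total[OF vr, of "T i / T x"] nz by auto
    then have "T x / T i \<in> V" by simp
    then show ?thesis using i by auto
  qed
qed

context setting begin

lemma hpow_pos_max: "V \<in> Dp \<Longrightarrow> m > 0 \<Longrightarrow> h ^ m \<in> max_ideal V"
proof -
  assume V: "V \<in> Dp" "m > 0"
  note vr = DpD(1)[OF V(1)]
  obtain l where l: "m = Suc l" using V(2) gr0_implies_Suc by blast
  have "h ^ l \<in> V" using DpD(3)[OF V(1)] max_iff[OF vr] vr_power[OF vr] by blast
  then have "h ^ l * h \<in> max_ideal V" using max_mult[OF vr _ DpD(3)[OF V(1)]] by blast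
  then show ?thesis using l by (simp add: mult.commute)
qed

lemma hpow_unit: assumes V: "V \<in> Dp" and u: "h powi j \<in> vr_units V" shows "j = 0"
proof -
  note vr = DpD(1)[OF V]
  have pos: False if "h powi i \<in> vr_units V" "i > 0" for i
  proof -
    have "h powi i = h ^ nat i" using that(2) by (simp add: power_int_def)
    then show False using hpow_pos_max[OF V, of "nat i"] that max_not_unit[OF vr] by auto
  qed
  show ?thesis
  proof (rule ccontr)
    assume "j \<noteq> 0"
    then consider "j > 0" | "j < 0" by linarith
    then show False
    proof cases
      case 1 then show ?thesis using pos u by blast
    next
      case 2
      have "h powi (- j) \<in> vr_units V" using units_inverse[OF vr u] by (simp add: power_int_minus)
      moreover have "0 < - j" using 2 by simp
      ultimately show ?thesis using pos by blast
    qed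
  qed
qed

lemma rep_exists:
  assumes V: "V \<in> Dp" and y: "y \<noteq> 0"
  shows "\<exists>N k. N > 0 \<and> y ^ N * h powi (- k) \<in> vr_units V"
proof -
  note vr = DpD(1)[OF V]
  obtain n P where P: "\<forall>j\<le>n. P j \<in> A0 F f" "\<exists>j\<le>n. P j \<noteq> 0" "(\<Sum>j\<le>n. P j * y ^ j) = 0"
    using alg by blast
  define J where "J = {j. j \<le> n \<and> P j \<noteq> 0}"
  define T where "T j = P j * y ^ j" for j
  have fin: "finite J" "J \<noteq> {}" using P(2) by (auto simp: J_def)
  have Tnz: "\<forall>j\<in>J. T j \<noteq> 0" using y by (auto simp: J_def T_def)
  have "\<forall>j\<in>J. \<exists>k. P j * h powi (- k) \<in> vr_units V" using A0_val P(1) V by (auto simp: J_def)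
  then obtain kk where kk: "\<forall>j\<in>J. P j * h powi (- kk j) \<in> vr_units V" by metis
  obtain i where i: "i \<in> J" "\<forall>j\<in>J. T j / T i \<in> V" using min_exists[OF vr fin Tnz] by blast
  have "\<exists>j\<in>J. j \<noteq> i \<and> T j / T i \<in> vr_units V"
  proof (rule ccontr)
    assume "\<not> ?thesis"
    then have m: "\<forall>j\<in>J-{i}. T j / T i \<in> max_ideal V" using i in_V_cases[OF vr] by blast
    have "(\<Sum>j\<le>n. P j * y ^ j) = (\<Sum>j\<in>J. T j)"
      unfolding T_def by (rule sum.mono_neutral_right) (auto simp: J_def)
    also have "\<dots> = T i + (\<Sum>j\<in>J-{i}. T j)" using sum.remove[OF fin(1) i(1)] .
    also have "\<dots> = T i * (1 + (\<Sum>j\<in>J-{i}. T j / T i))"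
    proof -
      have "T i * (\<Sum>j\<in>J-{i}. T j / T i) = (\<Sum>j\<in>J-{i}. T j)"
        using Tnz i(1) by (simp add: sum_distrib_left)
      then show ?thesis by (simp add: distrib_left)
    qed
    finally have "T i * (1 + (\<Sum>j\<in>J-{i}. T j / T i)) = 0" using P(3) by simp
    moreover have "1 + (\<Sum>j\<in>J-{i}. T j / T i) \<in> vr_units V"
    proof -
      have "(\<Sum>j\<in>J-{i}. T j / T i) \<in> max_ideal V" using m by (intro max_sum[OF vr]) auto
      then show ?thesis using unit_plus_max[OF vr units_1[OF vr]] by blast
    qed
    ultimately show False using Tnz i(1) units_nz[OF vr] by auto
  qed
  then obtain j where j: "j \<in> J" "j \<noteq> i" "T j / T i \<in> vr_units V" by blast
  define ui where "ui = P i * h powi (- kk i)"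
  define uj where "uj = P j * h powi (- kk j)"
  have ui: "ui \<in> vr_units V" and uj: "uj \<in> vr_units V" using kk i j by (auto simp: ui_def uj_def)
  have Pnz: "P i \<noteq> 0" "P j \<noteq> 0" using i j by (auto simp: J_def)
  have hh: "h powi (- kk i) / h powi (- kk j) = h powi (kk j - kk i)"
    using h_nz by (simp add: power_int_diff[symmetric])
  have key: "T j / T i * (ui / uj) = (y ^ j / y ^ i) * h powi (kk j - kk i)"
  proof -
    have "T j / T i * (ui / uj) = (y ^ j / y ^ i) * (h powi (- kk i) / h powi (- kk j))"
      using Pnz h_nz y by (simp add: T_def ui_def uj_def field_simps power_int_not_zero)
    then show ?thesis using hh by simp
  qed
  have U: "(y ^ j / y ^ i) * h powi (kk j - kk i) \<in> vr_units V"
    using key units_mult[OF vr j(3) units_divide[OF vr ui uj]] by simp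
  show ?thesis
  proof (cases "i < j")
    case True
    have "y ^ j / y ^ i = y ^ (j - i)" using power_diff[OF y, of i j] True by simp
    then show ?thesis using U True by (intro exI[of _ "j - i"] exI[of _ "kk i - kk j"]) auto
  next
    case False
    then have ji: "j < i" using j(2) by simp
    have "y ^ j / y ^ i = inverse (y ^ (i - j))" using power_diff[OF y, of j i] ji y
      by (simp add: field_simps)
    then have "inverse (y ^ (i - j) * h powi (kk i - kk j)) \<in> vr_units V" using U h_nz
      by (simp add: power_int_diff field_simps power_int_not_zero)
    then have "y ^ (i - j) * h powi (kk i - kk j) \<in> vr_units V"
      using units_inverse[OF vr] by fastforce
    then show ?thesis using ji by (intro exI[of _ "i - j"] exI[of _ "kk j - kk i"]) auto
  qed
qed

end

context setting begin

definition vv :: "'a set \<Rightarrow> 'a \<Rightarrow> rat" where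
  "vv V y = (SOME q. \<exists>N k. N > 0 \<and> q = of_int k / of_nat N \<and> y ^ N * h powi (- k) \<in> vr_units V)"

lemma pow_rep: "(y ^ N * h powi (- k)) ^ M = y ^ (N * M) * h powi (- (k * int M))"
  by (simp add: power_mult_distrib power_int_power' power_mult)

lemma rep_unique:
  assumes V: "V \<in> Dp" and N: "N > 0" "M > 0"
    and u1: "y ^ N * h powi (- k) \<in> vr_units V" and u2: "y ^ M * h powi (- l) \<in> vr_units V"
  shows "(of_int k / of_nat N :: rat) = of_int l / of_nat M"
proof -
  note vr = DpD(1)[OF V]
  have y: "y \<noteq> 0" using units_nz[OF vr u1] N by auto
  have a: "y ^ (N * M) * h powi (- (k * int M)) \<in> vr_units V"
    using units_power[OF vr u1, of M] pow_rep by metis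
  have b: "y ^ (M * N) * h powi (- (l * int N)) \<in> vr_units V"
    using units_power[OF vr u2, of N] pow_rep by metis
  have yNM: "y ^ (M * N) \<noteq> 0" using y by simp
  have "(y ^ (N * M) * h powi (- (k * int M))) / (y ^ (M * N) * h powi (- (l * int N)))
        = h powi (- (k * int M)) / h powi (- (l * int N))"
    using yNM y N by (simp add: mult.commute[of N M])
  also have "\<dots> = h powi (- (k * int M) - - (l * int N))"
    using h_nz power_int_diff[of h "- (k * int M)" "- (l * int N)"] by simp
  finally have "h powi (- (k * int M) - - (l * int N)) \<in> vr_units V"
    using units_divide[OF vr a b] by simp
  then have "- (k * int M) - - (l * int N) = 0" using hpow_unit[OF V] by blast
  then have "k * int M = l * int N" by simp
  then have "(of_int k * of_nat M :: rat) = of_int l * of_nat N"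
    by (metis of_int_mult of_int_of_nat_eq)
  then show ?thesis using N by (simp add: field_simps)
qed

lemma vv_eq:
  assumes V: "V \<in> Dp" and N: "N > 0" and u: "y ^ N * h powi (- k) \<in> vr_units V"
  shows "vv V y = of_int k / of_nat N"
proof -
  let ?P = "\<lambda>q. \<exists>N k. N > 0 \<and> q = of_int k / of_nat N \<and> y ^ N * h powi (- k) \<in> vr_units V"
  have "?P (of_int k / of_nat N)" using N u by blast
  then have "?P (vv V y)" unfolding vv_def by (rule someI)
  then obtain N' k' where "N' > 0" "vv V y = of_int k' / of_nat N'" "y ^ N' * h powi (- k') \<in> vr_units V"
    by blast
  then show ?thesis using rep_unique[OF V N _ u] by metis
qed

lemma vv_exists:
  assumes V: "V \<in> Dp" and y: "y \<noteq> 0"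
  obtains N k where "N > 0" "y ^ N * h powi (- k) \<in> vr_units V" "vv V y = of_int k / of_nat N"
  using rep_exists[OF V y] vv_eq[OF V] by blast

lemma vv_mult:
  assumes V: "V \<in> Dp" and y: "y \<noteq> 0" and z: "z \<noteq> 0"
  shows "vv V (y * z) = vv V y + vv V z"
proof -
  note vr = DpD(1)[OF V]
  obtain N k where 1: "N > 0" "y ^ N * h powi (- k) \<in> vr_units V" "vv V y = of_int k / of_nat N"
    using vv_exists[OF V y] by blast
  obtain M l where 2: "M > 0" "z ^ M * h powi (- l) \<in> vr_units V" "vv V z = of_int l / of_nat M"
    using vv_exists[OF V z] by blast
  have "(y ^ N * h powi (- k)) ^ M * (z ^ M * h powi (- l)) ^ N
      = (y * z) ^ (N * M) * (h powi (- (k * int M)) * h powi (- (l * int N)))"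
    unfolding pow_rep by (simp add: power_mult_distrib mult.commute mult.left_commute)
  also have "\<dots> = (y * z) ^ (N * M) * h powi (- (k * int M + l * int N))"
    using h_nz by (simp add: power_int_add[symmetric])
  finally have U: "(y * z) ^ (N * M) * h powi (- (k * int M + l * int N)) \<in> vr_units V"
    using units_mult[OF vr units_power[OF vr 1(2)] units_power[OF vr 2(2)]] by metis
  have "vv V (y * z) = of_int (k * int M + l * int N) / of_nat (N * M)"
    by (rule vv_eq[OF V _ U]) (use 1(1) 2(1) in simp)
  also have "\<dots> = vv V y + vv V z" using 1 2 by (simp add: field_simps)
  finally show ?thesis .
qed

lemma vv_inverse:
  assumes V: "V \<in> Dp" and y: "y \<noteq> 0"
  shows "vv V (inverse y) = - vv V y"
proof -
  note vr = DpD(1)[OF V]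
  obtain N k where 1: "N > 0" "y ^ N * h powi (- k) \<in> vr_units V" "vv V y = of_int k / of_nat N"
    using vv_exists[OF V y] by blast
  have "inverse y ^ N * h powi (- (- k)) = inverse (y ^ N * h powi (- k))"
    by (simp add: power_inverse power_int_minus)
  then have "inverse y ^ N * h powi (- (- k)) \<in> vr_units V" using units_inverse[OF vr 1(2)] by simp
  then have "vv V (inverse y) = of_int (- k) / of_nat N" using vv_eq[OF V 1(1)] by blast
  then show ?thesis using 1 by simp
qed

lemma vv_unit: assumes V: "V \<in> Dp" and u: "u \<in> vr_units V" shows "vv V u = 0"
  using vv_eq[OF V, of 1 u 0] u by simp

lemma vv_h: assumes V: "V \<in> Dp" shows "vv V h = 1"
  using vv_eq[OF V, of 1 h 1] h_nz units_1[OF DpD(1)[OF V]] by (simp add: power_int_minus)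

lemma vv_nonneg_iff:
  assumes V: "V \<in> Dp" and y: "y \<noteq> 0"
  shows "y \<in> V \<longleftrightarrow> vv V y \<ge> 0"
proof -
  note vr = DpD(1)[OF V]
  obtain N k where 1: "N > 0" "y ^ N * h powi (- k) \<in> vr_units V" "vv V y = of_int k / of_nat N"
    using vv_exists[OF V y] by blast
  show ?thesis
  proof (cases "k \<ge> 0")
    case True
    have "h powi (- k) * h ^ nat k = 1" using h_nz True by (simp add: power_int_minus power_int_nonneg_exp)
    then have "y ^ N = (y ^ N * h powi (- k)) * h ^ nat k" by (metis mult.assoc mult_1_right)
    then have "y ^ N \<in> V" using units_in[OF vr 1(2)] vr_mult[OF vr] vr_power[OF vr]
        DpD(3)[OF V] max_iff[OF vr] by metis
    then have "y \<in> V" using vr_root[OF vr] 1(1) by blast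
    moreover have "vv V y \<ge> 0" using 1 True by simp
    ultimately show ?thesis by simp
  next
    case False
    have "vv V y < 0" using 1 False by (simp add: divide_neg_pos)
    moreover have "y \<notin> V"
    proof
      assume "y \<in> V"
      then have yN: "y ^ N \<in> V" using vr_power[OF vr] by blast
      have e: "h powi (- k) = h ^ nat (- k)" using False by (simp add: power_int_nonneg_exp)
      have "h ^ nat (- k) \<in> max_ideal V" using hpow_pos_max[OF V] False by simp
      then have "y ^ N * h ^ nat (- k) \<in> max_ideal V" using max_mult[OF vr yN] by blast
      then have "y ^ N * h powi (- k) \<in> max_ideal V" using e by simp
      then show False using max_not_unit[OF vr] 1(2) by blast
    qed
    ultimately show ?thesis by simp
  qed
qed

lemma vv_zero_iff:
  assumes V: "V \<in> Dp" and y: "y \<noteq> 0"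
  shows "y \<in> vr_units V \<longleftrightarrow> vv V y = 0"
proof -
  have iy: "inverse y \<noteq> 0" using y by simp
  have "y \<in> vr_units V \<longleftrightarrow> y \<in> V \<and> inverse y \<in> V" using units_iff[OF DpD(1)[OF V]] y by simp
  also have "\<dots> \<longleftrightarrow> vv V y \<ge> 0 \<and> vv V (inverse y) \<ge> 0"
    using vv_nonneg_iff[OF V y] vv_nonneg_iff[OF V iy] by simp
  also have "\<dots> \<longleftrightarrow> vv V y = 0" unfolding vv_inverse[OF V y] by linarith
  finally show ?thesis .
qed

lemma vv_pos_iff:
  assumes V: "V \<in> Dp" and y: "y \<noteq> 0"
  shows "y \<in> max_ideal V \<longleftrightarrow> vv V y > 0"
proof -
  have "y \<in> max_ideal V \<longleftrightarrow> y \<in> V \<and> y \<notin> vr_units V" unfolding max_ideal_def by simp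
  also have "\<dots> \<longleftrightarrow> vv V y \<ge> 0 \<and> vv V y \<noteq> 0" using vv_nonneg_iff[OF V y] vv_zero_iff[OF V y] by simp
  finally show ?thesis by linarith
qed

lemma vv_1: "V \<in> Dp \<Longrightarrow> vv V 1 = 0"
  by (rule vv_unit, assumption, rule units_1, rule DpD(1))

lemma vv_divide: "V \<in> Dp \<Longrightarrow> y \<noteq> 0 \<Longrightarrow> z \<noteq> 0 \<Longrightarrow> vv V (y / z) = vv V y - vv V z"
  by (simp add: divide_inverse vv_mult vv_inverse)

lemma vv_power: assumes V: "V \<in> Dp" and y: "y \<noteq> 0" shows "vv V (y ^ n) = of_nat n * vv V y"
proof (induction n)
  case 0 then show ?case using vv_1[OF V] by simp
next
  case (Suc n)
  have "vv V (y ^ Suc n) = vv V y + vv V (y ^ n)" using vv_mult[OF V y, of "y ^ n"] y by simp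
  then show ?case using Suc by (simp add: algebra_simps)
qed

lemma vv_powi: "V \<in> Dp \<Longrightarrow> y \<noteq> 0 \<Longrightarrow> vv V (y powi k) = of_int k * vv V y"
proof (cases "k \<ge> 0")
  case True
  assume V: "V \<in> Dp" and y: "y \<noteq> 0"
  have "y powi k = y ^ nat k" using True by (simp add: power_int_nonneg_exp)
  then show ?thesis using vv_power[OF V y, of "nat k"] True by simp
next
  case False
  assume V: "V \<in> Dp" and y: "y \<noteq> 0"
  have "y powi k = inverse (y ^ nat (- k))" using False by (simp add: power_int_def power_inverse)
  then show ?thesis using vv_power[OF V y, of "nat (- k)"] vv_inverse[OF V, of "y ^ nat (- k)"] False y by simp
qed

lemma vv_uminus: assumes V: "V \<in> Dp" shows "vv V (- y) = vv V y"
proof (cases "y = 0")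
  case True then show ?thesis by simp
next
  case False
  have "- y = (- 1) * y" by simp
  moreover have "vv V (- 1) = 0" using vv_unit[OF V] units_uminus[OF DpD(1)[OF V] units_1[OF DpD(1)[OF V]]] by simp
  ultimately show ?thesis using vv_mult[OF V, of "-1" y] False by simp
qed

lemma vv_F: "V \<in> Dp \<Longrightarrow> c \<in> F \<Longrightarrow> c \<noteq> 0 \<Longrightarrow> vv V c = 0"
  by (rule vv_unit, assumption, rule subfield_units[OF DpD(1) F_sub DpD(2)])

lemma vv_unit_mult: "V \<in> Dp \<Longrightarrow> u \<in> vr_units V \<Longrightarrow> y \<noteq> 0 \<Longrightarrow> vv V (u * y) = vv V y"
  using vv_mult[of V u y] vv_unit[of V u] units_nz[OF DpD(1), of V u] by simp

lemma vv_add_ge: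
  assumes V: "V \<in> Dp" and nz: "y \<noteq> 0" "z \<noteq> 0" "y + z \<noteq> 0"
  shows "vv V (y + z) \<ge> min (vv V y) (vv V z)"
proof -
  note vr = DpD(1)[OF V]
  have main: "vv V (a + b) \<ge> vv V a" if ab: "a \<noteq> 0" "b \<noteq> 0" "a + b \<noteq> 0" "vv V a \<le> vv V b" for a b
  proof -
    have "vv V (b / a) \<ge> 0" using vv_divide[OF V ab(2) ab(1)] ab(4) by simp
    then have "b / a \<in> V" using vv_nonneg_iff[OF V] ab by simp
    then have "1 + b / a \<in> V" using vr_add[OF vr vr_1[OF vr]] by blast
    moreover have "1 + b / a \<noteq> 0" using ab by (simp add: field_simps)
    ultimately have "vv V (1 + b / a) \<ge> 0" using vv_nonneg_iff[OF V] by blast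
    moreover have "a + b = a * (1 + b / a)" using ab by (simp add: field_simps)
    ultimately show ?thesis using vv_mult[OF V ab(1) \<open>1 + b / a \<noteq> 0\<close>] by simp
  qed
  show ?thesis
  proof (cases "vv V y \<le> vv V z")
    case True then show ?thesis using main[of y z] nz by simp
  next
    case False then show ?thesis using main[of z y] nz by (simp add: add.commute)
  qed
qed

definition ge :: "'a set \<Rightarrow> rat \<Rightarrow> 'a \<Rightarrow> bool" where
  "ge V r y \<longleftrightarrow> y = 0 \<or> r \<le> vv V y"

lemma ge_0: "ge V r 0" by (simp add: ge_def)
lemma ge_self: "ge V (vv V y) y" by (simp add: ge_def)
lemma ge_mono: "r' \<le> r \<Longrightarrow> ge V r y \<Longrightarrow> ge V r' y" by (auto simp: ge_def)

lemma ge_add: assumes V: "V \<in> Dp" "ge V r y" "ge V r z" shows "ge V r (y + z)"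
proof -
  consider "y = 0" | "z = 0" | "y + z = 0" | "y \<noteq> 0" "z \<noteq> 0" "y + z \<noteq> 0" by blast
  then show ?thesis
  proof cases
    case 4
    then show ?thesis using vv_add_ge[OF V(1) 4] V by (auto simp: ge_def)
  qed (use V in \<open>auto simp: ge_def\<close>)
qed

lemma ge_uminus: "V \<in> Dp \<Longrightarrow> ge V r y \<Longrightarrow> ge V r (- y)"
  by (auto simp: ge_def vv_uminus)

lemma ge_diff: "V \<in> Dp \<Longrightarrow> ge V r y \<Longrightarrow> ge V r z \<Longrightarrow> ge V r (y - z)"
  using ge_add[of V r y "- z"] ge_uminus by auto

lemma ge_sum: "V \<in> Dp \<Longrightarrow> (\<And>i. i \<in> I \<Longrightarrow> ge V r (g i)) \<Longrightarrow> ge V r (sum g I)"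
  by (induction I rule: infinite_finite_induct) (auto simp: ge_0 ge_add)

lemma ge_mult: "V \<in> Dp \<Longrightarrow> ge V r y \<Longrightarrow> ge V s z \<Longrightarrow> ge V (r + s) (y * z)"
  by (cases "y = 0"; cases "z = 0") (auto simp: ge_def vv_mult)

lemma vv_dom:
  assumes V: "V \<in> Dp" and t: "t \<noteq> 0" and y: "ge V r y" and r: "r > vv V t"
  shows "t + y \<noteq> 0" "vv V (t + y) = vv V t"
proof -
  have "t + y \<noteq> 0 \<and> vv V (t + y) = vv V t"
  proof (cases "y = 0")
    case True then show ?thesis using t by simp
  next
    case False
    then have yv: "vv V y > vv V t" using y r by (simp add: ge_def)
    have ty: "t + y \<noteq> 0"
    proof
      assume "t + y = 0"
      then have "y = - t" by (metis add.commute neg_eq_iff_add_eq_0)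
      then show False using yv vv_uminus[OF V] by simp
    qed
    have 1: "vv V (t + y) \<ge> vv V t" using vv_add_ge[OF V t False ty] yv by simp
    have "t = (t + y) + (- y)" by simp
    then have "vv V t \<ge> min (vv V (t + y)) (vv V (- y))"
      using vv_add_ge[OF V ty, of "- y"] False t by simp
    moreover have "vv V (- y) > vv V t" using yv vv_uminus[OF V] by simp
    ultimately have "vv V t \<ge> vv V (t + y)" by linarith
    then show ?thesis using 1 ty by simp
  qed
  then show "t + y \<noteq> 0" "vv V (t + y) = vv V t" by auto
qed

end

lemma arch_ev: "(a::rat) > 0 \<Longrightarrow> \<forall>\<^sub>F N in sequentially. b < of_nat N * a"
proof -
  assume a: "a > 0"
  obtain N0 where N0: "b < of_nat N0 * a" using ex_less_of_nat_mult[OF a] by blast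
  show ?thesis
  proof (rule eventually_sequentiallyI[of N0])
    fix N assume "N0 \<le> N"
    then have "of_nat N0 * a \<le> of_nat N * a" using a by (simp add: mult_right_mono)
    then show "b < of_nat N * a" using N0 by linarith
  qed
qed

context setting begin

lemma Dp_incomparable:
  assumes V: "V \<in> Dp" and W: "W \<in> Dp" and sub: "V \<subseteq> W"
  shows "V = W"
proof (rule ccontr)
  assume "V \<noteq> W"
  then obtain y where y: "y \<in> W" "y \<notin> V" using sub by blast
  note vrV = DpD(1)[OF V] and vrW = DpD(1)[OF W]
  have y0: "y \<noteq> 0" using y vr_0[OF vrV] by auto
  have yneg: "vv V y < 0" using vv_nonneg_iff[OF V y0] y by simp
  have "inverse h \<in> W"
  proof -
    let ?z = "inverse h"
    have z0: "?z \<noteq> 0" using h_nz by simp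
    obtain N where N: "- vv V ?z < of_nat N * (- vv V y)"
      using ex_less_of_nat_mult[of "- vv V y" "- vv V ?z"] yneg by auto
    have yN: "y ^ N \<noteq> 0" using y0 by simp
    have "vv V (?z / y ^ N) = vv V ?z - of_nat N * vv V y"
      using vv_divide[OF V z0 yN] vv_power[OF V y0] by simp
    also have "\<dots> \<ge> 0" using N by (simp add: algebra_simps)
    finally have "?z / y ^ N \<in> V" using vv_nonneg_iff[OF V] z0 yN by simp
    then have "?z / y ^ N \<in> W" using sub by blast
    moreover have "y ^ N \<in> W" using vr_power[OF vrW y(1)] .
    ultimately have "?z / y ^ N * y ^ N \<in> W" using vr_mult[OF vrW] by blast
    moreover have "?z / y ^ N * y ^ N = ?z" using yN by (metis divide_inverse mult.assoc left_inverse mult_1_right)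
    ultimately show ?thesis by simp
  qed
  then show False using h_inv_notin[OF W] by blast
qed

lemma sep_pair:
  assumes V: "V \<in> Dp" and W: "W \<in> Dp" and ne: "V \<noteq> W"
  shows "\<exists>y. y \<noteq> 0 \<and> vv V y < 0 \<and> vv W y > 0"
proof -
  have "\<not> W \<subseteq> V" using Dp_incomparable[OF W V] ne by blast
  then obtain b where b: "b \<in> W" "b \<notin> V" by blast
  have "\<not> V \<subseteq> W" using Dp_incomparable[OF V W] ne by blast
  then obtain a where a: "a \<in> V" "a \<notin> W" by blast
  have b0: "b \<noteq> 0" using b vr_0[OF DpD(1)[OF V]] by auto
  have a0: "a \<noteq> 0" using a vr_0[OF DpD(1)[OF W]] by auto
  have "vv V b < 0" "vv W b \<ge> 0" using vv_nonneg_iff[OF V b0] vv_nonneg_iff[OF W b0] b by auto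
  moreover have "vv V a \<ge> 0" "vv W a < 0" using vv_nonneg_iff[OF V a0] vv_nonneg_iff[OF W a0] a by auto
  ultimately show ?thesis using vv_divide[OF V b0 a0] vv_divide[OF W b0 a0] a0 b0
    by (intro exI[of _ "b / a"]) auto
qed

lemma vv_1plus_pos:
  assumes V: "V \<in> Dp" and w: "w \<noteq> 0" "vv V w > 0"
  shows "1 + w \<noteq> 0" "vv V (1 + w) = 0"
  using vv_dom[OF V one_neq_zero, of "vv V w" w] w vv_1[OF V] ge_self[of V w] by auto

lemma vv_1plus_neg:
  assumes V: "V \<in> Dp" and w: "w \<noteq> 0" "vv V w < 0"
  shows "1 + w \<noteq> 0" "vv V (1 + w) = vv V w"
proof -
  have "ge V 0 1" using vv_1[OF V] by (simp add: ge_def)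
  then have "w + 1 \<noteq> 0 \<and> vv V (w + 1) = vv V w" using vv_dom[OF V w(1), of 0 1] w by simp
  then show "1 + w \<noteq> 0" "vv V (1 + w) = vv V w" by (simp_all add: add.commute)
qed

lemma artin:
  assumes V0: "V0 \<in> Dp" and T: "finite T" "T \<subseteq> Dp" "V0 \<notin> T"
  shows "\<exists>z. z \<noteq> 0 \<and> vv V0 z < 0 \<and> (\<forall>W\<in>T. vv W z > 0)"
  using T
proof (induction T rule: finite_induct)
  case empty
  show ?case using vv_inverse[OF V0 h_nz] vv_h[OF V0] h_nz by (intro exI[of _ "inverse h"]) auto
next
  case (insert Wn T)
  then obtain z where z: "z \<noteq> 0" "vv V0 z < 0" "\<forall>W\<in>T. vv W z > 0" by auto
  have Wn: "Wn \<in> Dp" and TD: "T \<subseteq> Dp" using insert by auto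
  obtain y where y: "y \<noteq> 0" "vv V0 y < 0" "vv Wn y > 0"
    using sep_pair[OF V0 Wn] insert by auto
  have ev1: "\<forall>\<^sub>F N in sequentially. \<forall>W\<in>T. - vv W y < of_nat N * vv W z"
    by (rule eventually_ball_finite) (use insert(1) z(3) arch_ev in auto)
  have ev2: "\<forall>\<^sub>F N in sequentially. 1 \<le> N" by (rule eventually_ge_at_top)
  obtain N0 where "\<forall>n\<ge>N0. (\<forall>W\<in>T. - vv W y < of_nat n * vv W z) \<and> 1 \<le> n"
    using eventually_conj[OF ev1 ev2] unfolding eventually_sequentially by blast
  then have N: "\<forall>W\<in>T. - vv W y < of_nat N0 * vv W z" "1 \<le> N0" by auto
  define N where "N = N0"
  note N = N[folded N_def]
  have zN: "z ^ N \<noteq> 0" using z by simp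
  have vzN: "\<And>V. V \<in> Dp \<Longrightarrow> vv V (z ^ N) = of_nat N * vv V z" using vv_power z(1) by blast
  consider "vv Wn z > 0" | "vv Wn z = 0" | "vv Wn z < 0" by linarith
  then show ?case
  proof cases
    case 1 then show ?thesis using z by auto
  next
    case 2
    have nz: "z ^ N * y \<noteq> 0" using zN y by simp
    have "\<And>V. V \<in> Dp \<Longrightarrow> vv V (z ^ N * y) = of_nat N * vv V z + vv V y"
      using vv_mult zN y(1) vzN by simp
    moreover have "of_nat N * vv V0 z \<le> 0" using z(2) by (simp add: mult_nonneg_nonpos)
    ultimately show ?thesis using nz y N 2 V0 Wn TD by (intro exI[of _ "z ^ N * y"]) fastforce
  next
    case 3
    define z' where "z' = z ^ N * y / (1 + z ^ N)"
    have pN: "(of_nat N :: rat) > 0" using N by simp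
    have a0: "1 + z ^ N \<noteq> 0" "vv V0 (1 + z ^ N) = of_nat N * vv V0 z"
      using vv_1plus_neg[OF V0 zN] vzN[OF V0] z(2) pN by (auto simp: mult_pos_neg)
    have an: "vv Wn (1 + z ^ N) = of_nat N * vv Wn z"
      using vv_1plus_neg[OF Wn zN] vzN[OF Wn] 3 pN by (auto simp: mult_pos_neg)
    have aT: "\<And>W. W \<in> T \<Longrightarrow> vv W (1 + z ^ N) = 0"
      using vv_1plus_pos zN vzN z(3) pN TD by (auto simp: subset_iff)
    have z'nz: "z' \<noteq> 0" using zN y a0 by (simp add: z'_def)
    have vz': "\<And>V. V \<in> Dp \<Longrightarrow> vv V z' = of_nat N * vv V z + vv V y - vv V (1 + z ^ N)"
      using vv_divide vv_mult zN y(1) a0(1) vzN by (simp add: z'_def)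
    have "vv V0 z' < 0" using vz'[OF V0] a0(2) y(2) by simp
    moreover have "vv Wn z' > 0" using vz'[OF Wn] an y(3) by simp
    moreover have "\<forall>W\<in>T. vv W z' > 0" using vz' aT N(1) TD by fastforce
    ultimately show ?thesis using z'nz by auto
  qed
qed

lemma idem:
  assumes V0: "V0 \<in> S" and S: "finite S" "S \<subseteq> Dp"
  shows "\<exists>e. ge V0 R (e - 1) \<and> (\<forall>W\<in>S-{V0}. ge W R e)"
proof -
  have V0D: "V0 \<in> Dp" using V0 S by auto
  obtain z where z: "z \<noteq> 0" "vv V0 z < 0" "\<forall>W\<in>S-{V0}. vv W z > 0"
    using artin[OF V0D, of "S - {V0}"] S by auto
  have ev1: "\<forall>\<^sub>F N in sequentially. \<forall>W\<in>S-{V0}. R < of_nat N * vv W z"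
    by (rule eventually_ball_finite) (use S(1) z(3) arch_ev in auto)
  have ev2: "\<forall>\<^sub>F N in sequentially. 1 \<le> N" by (rule eventually_ge_at_top)
  have ev3: "\<forall>\<^sub>F N in sequentially. R < of_nat N * (- vv V0 z)" using z(2) by (intro arch_ev) simp
  obtain N0 where "\<forall>n\<ge>N0. ((\<forall>W\<in>S-{V0}. R < of_nat n * vv W z) \<and> 1 \<le> n) \<and> R < of_nat n * (- vv V0 z)"
    using eventually_conj[OF eventually_conj[OF ev1 ev2] ev3] unfolding eventually_sequentially by blast
  then have N: "\<forall>W\<in>S-{V0}. R < of_nat N0 * vv W z" "R < of_nat N0 * (- vv V0 z)" "1 \<le> N0" by auto
  define N where "N = N0"
  note N = N[folded N_def]
  have zN: "z ^ N \<noteq> 0" using z by simp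
  have pN: "(of_nat N :: rat) > 0" using N by simp
  have a0: "1 + z ^ N \<noteq> 0" "vv V0 (1 + z ^ N) = of_nat N * vv V0 z"
    using vv_1plus_neg[OF V0D zN] vv_power[OF V0D z(1)] z(2) pN by (auto simp: mult_pos_neg)
  define e where "e = z ^ N / (1 + z ^ N)"
  have "e - 1 = - inverse (1 + z ^ N)" using a0 by (simp add: e_def field_simps)
  then have "vv V0 (e - 1) = - vv V0 (1 + z ^ N)" using vv_uminus[OF V0D] vv_inverse[OF V0D a0(1)] by simp
  then have 1: "ge V0 R (e - 1)" using a0 N(2) by (simp add: ge_def)
  have 2: "ge W R e" if W: "W \<in> S - {V0}" for W
  proof -
    have WD: "W \<in> Dp" using W S by auto
    have "vv W (z ^ N) > 0" using vv_power[OF WD z(1)] z(3) W pN by simp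
    then have "vv W (1 + z ^ N) = 0" using vv_1plus_pos[OF WD zN] by simp
    then have "vv W e = of_nat N * vv W z" using vv_divide[OF WD zN a0(1)] vv_power[OF WD z(1)] by (simp add: e_def)
    moreover have "R < of_nat N * vv W z" using N(1) W by blast
    ultimately show ?thesis by (simp add: ge_def)
  qed
  show ?thesis using 1 2 by blast
qed

lemma approx:
  assumes S: "finite S" "S \<subseteq> Dp"
  shows "\<exists>\<xi>. \<forall>V\<in>S. ge V (r V) (\<xi> - t V)"
proof -
  define R where "R = 1 + (\<Sum>V\<in>S. \<Sum>W\<in>S. \<bar>r V\<bar> + \<bar>vv V (t W)\<bar>)"
  have Rb: "\<bar>r V\<bar> + \<bar>vv V (t W)\<bar> \<le> R" if "V \<in> S" "W \<in> S" for V W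
  proof -
    have "\<bar>r V\<bar> + \<bar>vv V (t W)\<bar> \<le> (\<Sum>W\<in>S. \<bar>r V\<bar> + \<bar>vv V (t W)\<bar>)"
      by (rule member_le_sum) (use that S in auto)
    also have "\<dots> \<le> (\<Sum>V\<in>S. \<Sum>W\<in>S. \<bar>r V\<bar> + \<bar>vv V (t W)\<bar>)"
      by (rule member_le_sum[where f = "\<lambda>V. \<Sum>W\<in>S. \<bar>r V\<bar> + \<bar>vv V (t W)\<bar>"]) (use that S in \<open>auto intro: sum_nonneg\<close>)
    finally show ?thesis by (simp add: R_def)
  qed
  have "\<forall>W\<in>S. \<exists>e. ge W R (e - 1) \<and> (\<forall>V\<in>S-{W}. ge V R e)" using idem S by blast
  then obtain e where e: "\<forall>W\<in>S. ge W R (e W - 1) \<and> (\<forall>V\<in>S-{W}. ge V R (e W))" by metis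
  define \<xi> where "\<xi> = (\<Sum>W\<in>S. e W * t W)"
  have "ge V (r V) (\<xi> - t V)" if V: "V \<in> S" for V
  proof -
    have VD: "V \<in> Dp" using V S by auto
    have trm: "ge V (r V) (g * t W)" if "W \<in> S" "ge V R g" for g W
    proof -
      have "ge V (R + vv V (t W)) (g * t W)" using ge_mult[OF VD that(2) ge_self] .
      moreover have "r V \<le> R + vv V (t W)" using Rb[OF V that(1)] by linarith
      ultimately show ?thesis using ge_mono by blast
    qed
    have "\<xi> - t V = (e V - 1) * t V + (\<Sum>W\<in>S-{V}. e W * t W)"
      unfolding \<xi>_def using sum.remove[OF S(1) V, of "\<lambda>W. e W * t W"] by (simp add: algebra_simps)
    moreover have "ge V (r V) ((e V - 1) * t V)" using trm[OF V] e V by blast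
    moreover have "ge V (r V) (\<Sum>W\<in>S-{V}. e W * t W)"
      using e V by (intro ge_sum[OF VD] trm) auto
    ultimately show ?thesis using ge_add[OF VD] by simp
  qed
  then show ?thesis by blast
qed

end

lemma lin_dep:
  fixes u :: "'i \<Rightarrow> 'j \<Rightarrow> 'a::field"
  assumes E: "subfield E" and J: "finite J"
  shows "finite I \<Longrightarrow> card I > card J \<Longrightarrow> (\<forall>i\<in>I. \<forall>j\<in>J. u i j \<in> E) \<Longrightarrow>
    \<exists>c. (\<forall>i\<in>I. c i \<in> E) \<and> (\<exists>i\<in>I. c i \<noteq> 0) \<and> (\<forall>j\<in>J. (\<Sum>i\<in>I. c i * u i j) = 0)"
  using J
proof (induction J arbitrary: I u rule: finite_induct)
  case empty
  then obtain i0 where "i0 \<in> I" by (metis card.empty all_not_in_conv less_irrefl)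
  then show ?case using E by (intro exI[of _ "\<lambda>i. if i = i0 then 1 else 0"]) (auto simp: subfield_0 subfield_1)
next
  case (insert j0 J)
  show ?case
  proof (cases "\<forall>i\<in>I. u i j0 = 0")
    case True
    obtain c where c: "\<forall>i\<in>I. c i \<in> E" "\<exists>i\<in>I. c i \<noteq> 0" "\<forall>j\<in>J. (\<Sum>i\<in>I. c i * u i j) = 0"
      using insert.IH[of I u] insert.prems insert.hyps by auto
    then show ?thesis using True by (intro exI[of _ c]) auto
  next
    case False
    then obtain i0 where i0: "i0 \<in> I" "u i0 j0 \<noteq> 0" by blast
    define I' where "I' = I - {i0}"
    define u' where "u' i j = u i j - (u i j0 / u i0 j0) * u i0 j" for i j
    have fI': "finite I'" using insert.prems by (simp add: I'_def)
    have cI': "card I' > card J" using insert.prems insert.hyps i0 by (simp add: I'_def card_Diff_singleton)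
    have uE: "\<forall>i\<in>I'. \<forall>j\<in>J. u' i j \<in> E" using insert.prems i0
      by (auto simp: u'_def I'_def intro!: subfield_diff[OF E] subfield_mult[OF E] subfield_divide[OF E])
    obtain c' where c': "\<forall>i\<in>I'. c' i \<in> E" "\<exists>i\<in>I'. c' i \<noteq> 0" "\<forall>j\<in>J. (\<Sum>i\<in>I'. c' i * u' i j) = 0"
      using insert.IH[OF fI' cI' uE] by blast
    define s where "s = (\<Sum>i\<in>I'. c' i * u i j0)"
    define c where "c i = (if i = i0 then - (s / u i0 j0) else c' i)" for i
    have split: "(\<Sum>i\<in>I. c i * u i j) = c i0 * u i0 j + (\<Sum>i\<in>I'. c' i * u i j)" for j
    proof -
      have "(\<Sum>i\<in>I. c i * u i j) = c i0 * u i0 j + (\<Sum>i\<in>I'. c i * u i j)"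
        using sum.remove[OF insert.prems(1) i0(1)] by (simp add: I'_def)
      moreover have "(\<Sum>i\<in>I'. c i * u i j) = (\<Sum>i\<in>I'. c' i * u i j)"
        by (rule sum.cong) (auto simp: c_def I'_def)
      ultimately show ?thesis by simp
    qed
    have "\<forall>i\<in>I. c i \<in> E"
    proof
      fix i assume "i \<in> I"
      show "c i \<in> E"
      proof (cases "i = i0")
        case True
        have "s \<in> E" unfolding s_def using c'(1) insert.prems(3) by (auto simp: I'_def intro!: subfield_sum[OF E] subfield_mult[OF E])
        then show ?thesis using True i0 insert.prems(3)
          by (simp add: c_def subfield_uminus[OF E] subfield_divide[OF E])
      next
        case False then show ?thesis using c'(1) \<open>i \<in> I\<close> by (simp add: c_def I'_def)
      qed
    qed
    moreover have "\<exists>i\<in>I. c i \<noteq> 0" using c'(2) by (auto simp: c_def I'_def)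
    moreover have "\<forall>j\<in>insert j0 J. (\<Sum>i\<in>I. c i * u i j) = 0"
    proof
      fix j assume j: "j \<in> insert j0 J"
      show "(\<Sum>i\<in>I. c i * u i j) = 0"
      proof (cases "j = j0")
        case True
        have "c i0 * u i0 j0 = - s" using i0(2) by (simp add: c_def)
        then show ?thesis using split[of j0] True by (simp add: s_def)
      next
        case False
        then have jJ: "j \<in> J" using j by simp
        have "0 = (\<Sum>i\<in>I'. c' i * u' i j)" using c'(3) jJ by simp
        also have "\<dots> = (\<Sum>i\<in>I'. c' i * u i j - (c' i * u i j0 / u i0 j0) * u i0 j)"
          by (rule sum.cong) (simp_all add: u'_def algebra_simps)
        also have "\<dots> = (\<Sum>i\<in>I'. c' i * u i j) - (\<Sum>i\<in>I'. c' i * u i j0 / u i0 j0) * u i0 j"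
          by (simp add: sum_subtractf sum_distrib_right)
        also have "\<dots> = (\<Sum>i\<in>I'. c' i * u i j) - (\<Sum>i\<in>I'. c' i * u i j0) / u i0 j0 * u i0 j"
          by (simp add: sum_divide_distrib)
        finally have eq: "0 = (\<Sum>i\<in>I'. c' i * u i j) - s / u i0 j0 * u i0 j"
          unfolding s_def .
        have ci0: "c i0 = - (s / u i0 j0)" by (simp add: c_def)
        have "(\<Sum>i\<in>I. c i * u i j) = c i0 * u i0 j + (\<Sum>i\<in>I'. c' i * u i j)" by (rule split)
        also have "\<dots> = (\<Sum>i\<in>I'. c' i * u i j) - s / u i0 j0 * u i0 j" using ci0 by simp
        finally show ?thesis using eq by simp
      qed
    qed
    ultimately show ?thesis by blast
  qed
qed

definition spn :: "'a::field set \<Rightarrow> 'a set \<Rightarrow> 'a set" where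
  "spn E W = {\<Sum>w\<in>W. a w * w | a. \<forall>w\<in>W. a w \<in> E}"

context
  fixes E :: "'a::field set" and W :: "'a set"
  assumes E: "subfield E"
begin

lemma spnI: "(\<forall>w\<in>W. a w \<in> E) \<Longrightarrow> x = (\<Sum>w\<in>W. a w * w) \<Longrightarrow> x \<in> spn E W"
  unfolding spn_def by blast

lemma spnE: "x \<in> spn E W \<Longrightarrow> (\<And>a. \<forall>w\<in>W. a w \<in> E \<Longrightarrow> x = (\<Sum>w\<in>W. a w * w) \<Longrightarrow> thesis) \<Longrightarrow> thesis"
  unfolding spn_def by blast

lemma spn_0: "0 \<in> spn E W"
  by (rule spnI[of "\<lambda>_. 0"]) (auto simp: subfield_0[OF E])

lemma spn_add: "x \<in> spn E W \<Longrightarrow> y \<in> spn E W \<Longrightarrow> x + y \<in> spn E W"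
proof -
  assume "x \<in> spn E W" "y \<in> spn E W"
  then obtain a b where "\<forall>w\<in>W. a w \<in> E" "x = (\<Sum>w\<in>W. a w * w)" "\<forall>w\<in>W. b w \<in> E" "y = (\<Sum>w\<in>W. b w * w)"
    by (metis spnE)
  then show ?thesis
    by (intro spnI[of "\<lambda>w. a w + b w"]) (auto simp: subfield_add[OF E] sum.distrib algebra_simps)
qed

lemma spn_smult: "c \<in> E \<Longrightarrow> x \<in> spn E W \<Longrightarrow> c * x \<in> spn E W"
proof -
  assume c: "c \<in> E" and "x \<in> spn E W"
  then obtain a where "\<forall>w\<in>W. a w \<in> E" "x = (\<Sum>w\<in>W. a w * w)" by (metis spnE)
  then show ?thesis using c
    by (intro spnI[of "\<lambda>w. c * a w"]) (auto simp: subfield_mult[OF E] sum_distrib_left algebra_simps)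
qed

lemma spn_uminus: "x \<in> spn E W \<Longrightarrow> - x \<in> spn E W"
  using spn_smult[of "-1" x] subfield_uminus[OF E subfield_1[OF E]] by simp

lemma spn_sum: "(\<And>i. i \<in> I \<Longrightarrow> g i \<in> spn E W) \<Longrightarrow> sum g I \<in> spn E W"
  by (induction I rule: infinite_finite_induct) (auto simp: spn_0 spn_add)

lemma spn_gen: assumes "finite W" "w0 \<in> W" shows "w0 \<in> spn E W"
proof (rule spnI[of "\<lambda>w. if w = w0 then 1 else 0"])
  show "\<forall>w\<in>W. (if w = w0 then 1 else 0) \<in> E" by (auto simp: subfield_0[OF E] subfield_1[OF E])
  have "(\<Sum>w\<in>W. (if w = w0 then 1 else 0) * w) = (\<Sum>w\<in>W. if w = w0 then w else 0)"
    by (rule sum.cong) auto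
  also have "\<dots> = w0" using assms by (simp add: sum.delta')
  finally show "w0 = (\<Sum>w\<in>W. (if w = w0 then 1 else 0) * w)" by simp
qed

end

lemma spn_sub: assumes E: "subfield E" and sub: "W \<subseteq> spn E W2" shows "spn E W \<subseteq> spn E W2"
proof
  fix x assume "x \<in> spn E W"
  then obtain a where a: "\<forall>w\<in>W. a w \<in> E" "x = (\<Sum>w\<in>W. a w * w)" by (metis spnE[OF E])
  show "x \<in> spn E W2" unfolding a(2) using a(1) sub by (intro spn_sum[OF E] spn_smult[OF E]) auto
qed

lemma spn_mult:
  assumes E: "subfield E" and cl: "\<forall>w1\<in>W. \<forall>w2\<in>W. w1 * w2 \<in> spn E W"
    and x: "x \<in> spn E W" and y: "y \<in> spn E W"
  shows "x * y \<in> spn E W"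
proof -
  obtain a where a: "\<forall>w\<in>W. a w \<in> E" "x = (\<Sum>w\<in>W. a w * w)" using x by (metis spnE[OF E])
  obtain b where b: "\<forall>w\<in>W. b w \<in> E" "y = (\<Sum>w\<in>W. b w * w)" using y by (metis spnE[OF E])
  have "x * y = (\<Sum>w1\<in>W. \<Sum>w2\<in>W. (a w1 * b w2) * (w1 * w2))"
    unfolding a(2) b(2) sum_product by (simp add: algebra_simps)
  also have "\<dots> \<in> spn E W"
  proof (intro spn_sum[OF E])
    fix w1 w2 assume w: "w1 \<in> W" "w2 \<in> W"
    have "a w1 * b w2 \<in> E" using a(1) b(1) w subfield_mult[OF E] by blast
    moreover have "w1 * w2 \<in> spn E W" using cl w by blast
    ultimately show "(a w1 * b w2) * (w1 * w2) \<in> spn E W" by (rule spn_smult[OF E])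
  qed
  finally show ?thesis .
qed

context setting begin

definition EE where "EE = {a / b | a b. a \<in> A0 F f \<and> b \<in> A0 F f \<and> b \<noteq> 0}"

lemma EE_I: "a \<in> A0 F f \<Longrightarrow> b \<in> A0 F f \<Longrightarrow> b \<noteq> 0 \<Longrightarrow> x = a / b \<Longrightarrow> x \<in> EE"
  unfolding EE_def by blast

lemma A0_EE: "a \<in> A0 F f \<Longrightarrow> a \<in> EE"
  by (rule EE_I[of a 1]) (auto simp: A0_const F_sub subfield_1)

lemma EE_sub: "subfield EE"
proof -
  have A1: "1 \<in> A0 F f" using A0_const F_sub subfield_1 by blast
  have "0 \<in> EE" "1 \<in> EE" using A0_EE A0_const F_sub subfield_0 subfield_1 by blast+
  moreover have "x + y \<in> EE \<and> x * y \<in> EE" if xy: "x \<in> EE" "y \<in> EE" for x y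
  proof -
    obtain a b where ab: "a \<in> A0 F f" "b \<in> A0 F f" "b \<noteq> 0" "x = a / b"
      using xy(1) unfolding EE_def by blast
    obtain c d where cd: "c \<in> A0 F f" "d \<in> A0 F f" "d \<noteq> 0" "y = c / d"
      using xy(2) unfolding EE_def by blast
    note abcd = ab cd
    have "x + y = (a * d + c * b) / (b * d)" using abcd by (simp add: field_simps)
    moreover have "x * y = (a * c) / (b * d)" using abcd by simp
    ultimately show ?thesis using abcd F_sub
      by (intro conjI EE_I) (auto intro: A0_add A0_mult)
  qed
  moreover have "- x \<in> EE \<and> inverse x \<in> EE" if xE: "x \<in> EE" for x
  proof -
    obtain a b where ab: "a \<in> A0 F f" "b \<in> A0 F f" "b \<noteq> 0" "x = a / b"
      using xE unfolding EE_def by blast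
    have "- x = (- a) / b" using ab by simp
    then have "- x \<in> EE" using ab A0_uminus[OF F_sub ab(1)] by (intro EE_I[of "- a" b]) auto
    moreover have "inverse x \<in> EE"
    proof (cases "a = 0")
      case True then show ?thesis using ab \<open>0 \<in> EE\<close> by simp
    next
      case False
      then show ?thesis using ab by (intro EE_I[of b a]) auto
    qed
    ultimately show ?thesis by blast
  qed
  ultimately show ?thesis unfolding subfield_def by blast
qed

lemma vv_A0: assumes "V \<in> Dp" "a * h powi (- k) \<in> vr_units V" shows "vv V a = of_int k"
  using vv_eq[OF assms(1), of 1 a k] assms(2) by simp

lemma EE_val:
  assumes c: "c \<in> EE" "c \<noteq> 0"
  shows "\<exists>k. \<forall>V\<in>Dp. f \<in> V \<longrightarrow> vv V c = k" "\<exists>k. \<forall>V\<in>Dp. f \<notin> V \<longrightarrow> vv V c = k"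
proof -
  obtain a b where ab: "a \<in> A0 F f" "b \<in> A0 F f" "b \<noteq> 0" "c = a / b"
    using c unfolding EE_def by blast
  have a0: "a \<noteq> 0" using ab c by auto
  obtain ka where ka: "\<forall>V\<in>Dp. f \<in> V \<longrightarrow> a * h powi (- ka) \<in> vr_units V" using A0_val0[OF ab(1) a0] by blast
  obtain kb where kb: "\<forall>V\<in>Dp. f \<in> V \<longrightarrow> b * h powi (- kb) \<in> vr_units V" using A0_val0[OF ab(2) ab(3)] by blast
  show "\<exists>k. \<forall>V\<in>Dp. f \<in> V \<longrightarrow> vv V c = k"
  proof (intro exI[of _ "of_int ka - of_int kb"] ballI impI)
    fix V assume V: "V \<in> Dp" "f \<in> V"
    have "vv V a = of_int ka" "vv V b = of_int kb" using vv_A0[OF V(1)] ka kb V by auto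
    then show "vv V c = of_int ka - of_int kb" using vv_divide[OF V(1) a0 ab(3)] ab(4) by simp
  qed
  obtain la where la: "\<forall>V\<in>Dp. f \<notin> V \<longrightarrow> a * h powi (- la) \<in> vr_units V" using A0_valinf[OF ab(1) a0] by blast
  obtain lb where lb: "\<forall>V\<in>Dp. f \<notin> V \<longrightarrow> b * h powi (- lb) \<in> vr_units V" using A0_valinf[OF ab(2) ab(3)] by blast
  show "\<exists>k. \<forall>V\<in>Dp. f \<notin> V \<longrightarrow> vv V c = k"
  proof (intro exI[of _ "of_int la - of_int lb"] ballI impI)
    fix V assume V: "V \<in> Dp" "f \<notin> V"
    have "vv V a = of_int la" "vv V b = of_int lb" using vv_A0[OF V(1)] la lb V by auto
    then show "vv V c = of_int la - of_int lb" using vv_divide[OF V(1) a0 ab(3)] ab(4) by simp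
  qed
qed

lemma alg_EE: "\<exists>n P. (\<forall>j\<le>n. P j \<in> EE) \<and> (\<exists>j\<le>n. P j \<noteq> 0) \<and> (\<Sum>j\<le>n. P j * y ^ j) = 0"
  using alg[of y] A0_EE by blast

lemma monic:
  "\<exists>d b. d \<ge> 1 \<and> (\<forall>j<d. b j \<in> EE) \<and> s ^ d = (\<Sum>j<d. b j * s ^ j)"
proof -
  obtain n P where P: "\<forall>j\<le>n. P j \<in> EE" "\<exists>j\<le>n. P j \<noteq> 0" "(\<Sum>j\<le>n. P j * s ^ j) = 0"
    using alg_EE by blast
  define J where "J = {j. j \<le> n \<and> P j \<noteq> 0}"
  have fJ: "finite J" "J \<noteq> {}" using P(2) by (auto simp: J_def)
  define d where "d = Max J"
  have dJ: "d \<in> J" using Max_in[OF fJ] by (simp add: d_def)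
  have above: "P j = 0" if "j > d" "j \<le> n" for j
  proof (rule ccontr)
    assume "P j \<noteq> 0"
    then have "j \<in> J" using that(2) by (simp add: J_def)
    then have "j \<le> d" unfolding d_def using Max_ge[OF fJ(1)] by blast
    then show False using that(1) by simp
  qed
  have Pd: "P d \<noteq> 0" "d \<le> n" using dJ by (auto simp: J_def)
  have "(\<Sum>j\<le>n. P j * s ^ j) = (\<Sum>j\<le>d. P j * s ^ j)"
    by (rule sum.mono_neutral_right) (use Pd above in auto)
  also have "\<dots> = P d * s ^ d + (\<Sum>j<d. P j * s ^ j)"
    by (simp add: lessThan_Suc_atMost[symmetric])
  finally have eq: "P d * s ^ d = - (\<Sum>j<d. P j * s ^ j)" using P(3) by (simp add: eq_neg_iff_add_eq_0)
  have "d \<ge> 1"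
  proof (rule ccontr)
    assume "\<not> d \<ge> 1"
    then have "d = 0" by simp
    then show False using eq Pd by simp
  qed
  moreover have "s ^ d = (\<Sum>j<d. (- P j / P d) * s ^ j)"
  proof -
    have "s ^ d = - (\<Sum>j<d. P j * s ^ j) / P d" using eq Pd by (simp add: field_simps)
    also have "\<dots> = (\<Sum>j<d. (- P j / P d) * s ^ j)"
      by (simp add: sum_divide_distrib sum_negf[symmetric])
    finally show ?thesis .
  qed
  moreover have "\<forall>j<d. - P j / P d \<in> EE"
  proof (intro allI impI)
    fix j assume "j < d"
    then have "P j \<in> EE" "P d \<in> EE" using P(1) Pd by auto
    then show "- P j / P d \<in> EE" using subfield_divide[OF EE_sub subfield_uminus[OF EE_sub]] by blast
  qed
  ultimately show ?thesis by (intro exI[of _ d] exI[of _ "\<lambda>j. - P j / P d"]) simp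
qed

end

context setting begin

lemma span_step:
  assumes W: "finite W" "1 \<in> spn EE W" "\<forall>w1\<in>W. \<forall>w2\<in>W. w1 * w2 \<in> spn EE W"
  shows "\<exists>W'. finite W' \<and> 1 \<in> spn EE W' \<and> spn EE W \<subseteq> spn EE W' \<and> s \<in> spn EE W' \<and>
    (\<forall>w1\<in>W'. \<forall>w2\<in>W'. w1 * w2 \<in> spn EE W')"
proof -
  note E = EE_sub
  obtain d b where db: "d \<ge> 1" "\<forall>j<d. b j \<in> EE" "s ^ d = (\<Sum>j<d. b j * s ^ j)" using monic by blast
  define W' where "W' = (\<lambda>(w, j). w * s ^ j) ` (W \<times> {..<d})"
  have fW': "finite W'" using W(1) by (simp add: W'_def)
  have pw: "\<forall>w\<in>W. w * s ^ k \<in> spn EE W'" for k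
  proof (induction k rule: less_induct)
    case (less k)
    show ?case
    proof
      fix w assume w: "w \<in> W"
      show "w * s ^ k \<in> spn EE W'"
      proof (cases "k < d")
        case True
        then have "w * s ^ k \<in> W'" unfolding W'_def using w by (intro rev_image_eqI[of "(w, k)"]) auto
        then show ?thesis using spn_gen[OF E fW'] by blast
      next
        case False
        have "s ^ k = s ^ (k - d) * s ^ d" using False by (simp add: power_add[symmetric])
        then have "w * s ^ k = w * s ^ (k - d) * (\<Sum>j<d. b j * s ^ j)" using db(3) by (simp add: mult.assoc)
        also have "\<dots> = (\<Sum>j<d. b j * (w * s ^ (k - d + j)))"
          by (simp add: sum_distrib_left power_add algebra_simps)
        also have "\<dots> \<in> spn EE W'"
        proof (rule spn_sum[OF E])
          fix j assume j: "j \<in> {..<d}"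
          have "k - d + j < k" using j False db(1) by auto
          then have "w * s ^ (k - d + j) \<in> spn EE W'" using less.IH w by blast
          moreover have "b j \<in> EE" using db(2) j by auto
          ultimately show "b j * (w * s ^ (k - d + j)) \<in> spn EE W'" using spn_smult[OF E] by blast
        qed
        finally show ?thesis .
      qed
    qed
  qed
  have sub: "spn EE W \<subseteq> spn EE W'"
    using pw[of 0] by (intro spn_sub[OF E]) auto
  then have one: "1 \<in> spn EE W'" using W(2) by blast
  obtain a where a: "\<forall>w\<in>W. a w \<in> EE" "1 = (\<Sum>w\<in>W. a w * w)" using W(2) by (rule spnE[OF E])
  have ss: "s \<in> spn EE W'"
  proof -
    have "s = (\<Sum>w\<in>W. a w * w) * s" by (simp add: a(2)[symmetric])
    also have "\<dots> = (\<Sum>w\<in>W. a w * (w * s ^ 1))" by (simp add: sum_distrib_right mult.assoc)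
    also have "\<dots> \<in> spn EE W'" using a(1) pw[of 1] spn_smult[OF E] by (intro spn_sum[OF E]) blast
    finally show ?thesis .
  qed
  have cl: "\<forall>x1\<in>W'. \<forall>x2\<in>W'. x1 * x2 \<in> spn EE W'"
  proof (intro ballI)
    fix x1 x2 assume x12: "x1 \<in> W'" "x2 \<in> W'"
    obtain w1 i where x1: "w1 \<in> W" "x1 = w1 * s ^ i" using x12(1) unfolding W'_def by auto
    obtain w2 j where x2: "w2 \<in> W" "x2 = w2 * s ^ j" using x12(2) unfolding W'_def by auto
    note x = x1(1) x2(1) x1(2) x2(2)
    have "w1 * w2 \<in> spn EE W" using W(3) x(1,2) by blast
    then obtain c where c: "\<forall>w\<in>W. c w \<in> EE" "w1 * w2 = (\<Sum>w\<in>W. c w * w)"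
      by (rule spnE[OF E])
    have "x1 * x2 = (w1 * w2) * s ^ (i + j)" using x by (simp add: power_add algebra_simps)
    also have "\<dots> = (\<Sum>w\<in>W. c w * (w * s ^ (i + j)))" by (simp add: c(2) sum_distrib_right mult.assoc)
    also have "\<dots> \<in> spn EE W'" using c(1) pw[of "i + j"] spn_smult[OF E] by (intro spn_sum[OF E]) blast
    finally show "x1 * x2 \<in> spn EE W'" .
  qed
  show ?thesis using fW' one sub ss cl by blast
qed

lemma spn_inverse:
  assumes W: "1 \<in> spn EE W" "\<forall>w1\<in>W. \<forall>w2\<in>W. w1 * w2 \<in> spn EE W" and z: "z \<in> spn EE W"
  shows "inverse z \<in> spn EE W"
proof (cases "z = 0")
  case True then show ?thesis using spn_0[OF EE_sub] by simp
next
  case False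
  note E = EE_sub
  have zp: "z ^ m \<in> spn EE W" for m
    by (induction m) (use W z spn_mult[OF E W(2)] in auto)
  have sc: "c * z ^ m \<in> spn EE W" if "c \<in> EE" for c m using spn_smult[OF E that zp] .
  obtain n P where P: "\<forall>j\<le>n. P j \<in> EE" "\<exists>j\<le>n. P j \<noteq> 0" "(\<Sum>j\<le>n. P j * z ^ j) = 0"
    using alg_EE by blast
  define J where "J = {j. j \<le> n \<and> P j \<noteq> 0}"
  have fJ: "finite J" "J \<noteq> {}" using P(2) by (auto simp: J_def)
  define j0 where "j0 = Min J"
  have j0J: "j0 \<in> J" using Min_in[OF fJ] by (simp add: j0_def)
  have j0le: "j0 \<le> j" if "j \<in> J" for j using Min_le[OF fJ(1) that] by (simp add: j0_def)
  have Pj0: "P j0 \<noteq> 0" using j0J by (simp add: J_def)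
  define R where "R = (\<Sum>j\<in>J-{j0}. P j * z ^ (j - j0 - 1))"
  have "0 = (\<Sum>j\<in>J. P j * z ^ j)"
    unfolding P(3)[symmetric] by (rule sum.mono_neutral_right) (auto simp: J_def)
  also have "\<dots> = P j0 * z ^ j0 + (\<Sum>j\<in>J-{j0}. P j * z ^ j)" using sum.remove[OF fJ(1) j0J] .
  also have "(\<Sum>j\<in>J-{j0}. P j * z ^ j) = (\<Sum>j\<in>J-{j0}. z ^ j0 * z * (P j * z ^ (j - j0 - 1)))"
  proof (rule sum.cong)
    fix j assume "j \<in> J - {j0}"
    then have "j > j0" using j0le[of j] by auto
    then have "j = j0 + 1 + (j - j0 - 1)" by simp
    then have "z ^ j = z ^ j0 * z * z ^ (j - j0 - 1)" by (metis power_add power_one_right)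
    then show "P j * z ^ j = z ^ j0 * z * (P j * z ^ (j - j0 - 1))" by (simp add: algebra_simps)
  qed simp
  also have "\<dots> = z ^ j0 * z * R" by (simp add: R_def sum_distrib_left)
  finally have "z ^ j0 * (P j0 + z * R) = 0" by (simp add: algebra_simps)
  then have "P j0 + z * R = 0" using False by simp
  then have "inverse z = (- inverse (P j0)) * R" using False Pj0 by (simp add: field_simps eq_neg_iff_add_eq_0)
  also have "\<dots> \<in> spn EE W"
  proof (rule spn_smult[OF E])
    show "- inverse (P j0) \<in> EE" using P(1) j0J by (auto simp: J_def intro!: subfield_uminus[OF E] subfield_inverse[OF E])
    show "R \<in> spn EE W" unfolding R_def using P(1) by (intro spn_sum[OF E] sc) (auto simp: J_def)
  qed
  finally show ?thesis .
qed

end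

context setting begin

lemma span_all: "\<exists>W. finite W \<and> (\<forall>x. x \<in> spn EE W)"
proof -
  note E = EE_sub
  obtain S0 :: "'a set" where S0: "finite S0" "gen_subfield S0 = UNIV" using fg by auto
  have ex: "\<exists>W. finite W \<and> 1 \<in> spn EE W \<and> S \<subseteq> spn EE W \<and> (\<forall>w1\<in>W. \<forall>w2\<in>W. w1 * w2 \<in> spn EE W)"
    if "finite S" for S :: "'a set"
    using that
  proof (induction S rule: finite_induct)
    case empty
    have a: "1 \<in> spn EE {1::'a}" by (rule spn_gen[OF E]) auto
    have b: "\<forall>w1\<in>{1::'a}. \<forall>w2\<in>{1}. w1 * w2 \<in> spn EE {1}" using a by simp
    show ?case by (rule exI[of _ "{1}"]) (use a b in simp)
  next
    case (insert s S)
    then obtain W where W: "finite W" "1 \<in> spn EE W" "S \<subseteq> spn EE W" "\<forall>w1\<in>W. \<forall>w2\<in>W. w1 * w2 \<in> spn EE W"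
      by blast
    obtain W' where "finite W'" "1 \<in> spn EE W'" "spn EE W \<subseteq> spn EE W'" "s \<in> spn EE W'"
      "\<forall>w1\<in>W'. \<forall>w2\<in>W'. w1 * w2 \<in> spn EE W'"
      using span_step[OF W(1,2,4), of s] by blast
    then have "finite W' \<and> 1 \<in> spn EE W' \<and> insert s S \<subseteq> spn EE W' \<and> (\<forall>w1\<in>W'. \<forall>w2\<in>W'. w1 * w2 \<in> spn EE W')"
      using W(3) by blast
    then show ?case by blast
  qed
  from ex[OF S0(1)] obtain W where W: "finite W" "1 \<in> spn EE W" "S0 \<subseteq> spn EE W" "\<forall>w1\<in>W. \<forall>w2\<in>W. w1 * w2 \<in> spn EE W"
    by (elim exE conjE)
  have "subfield (spn EE W)"
    unfolding subfield_def
  proof (intro conjI ballI)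
    show "0 \<in> spn EE W" by (rule spn_0[OF E])
    show "1 \<in> spn EE W" by (rule W(2))
    fix x assume x: "x \<in> spn EE W"
    show "- x \<in> spn EE W" by (rule spn_uminus[OF E x])
    show "inverse x \<in> spn EE W" by (rule spn_inverse[OF W(2,4) x])
    fix y assume y: "y \<in> spn EE W"
    show "x + y \<in> spn EE W" by (rule spn_add[OF E x y])
    show "x * y \<in> spn EE W" by (rule spn_mult[OF E W(4) x y])
  qed
  then have "gen_subfield S0 \<subseteq> spn EE W" using gen_subfield_least W(3) by blast
  then show ?thesis using S0(2) W(1) by auto
qed

end

context setting begin

lemma class_finite:
  assumes C: "C \<subseteq> Dp" and hyp: "\<forall>c\<in>EE. c \<noteq> 0 \<longrightarrow> (\<exists>k. \<forall>V\<in>C. vv V c = k)"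
  shows "finite C"
proof (rule ccontr)
  assume inf: "infinite C"
  obtain W where W: "finite W" "\<forall>x. x \<in> spn EE W" using span_all by blast
  obtain S where S: "finite S" "card S = Suc (card W)" "S \<subseteq> C"
    using infinite_arbitrarily_large[OF inf] by blast
  have SD: "S \<subseteq> Dp" using S C by blast
  have "\<forall>V\<in>S. \<exists>e. ge V 1 (e - 1) \<and> (\<forall>W'\<in>S-{V}. ge W' 1 e)" using idem[OF _ S(1) SD] by blast
  then obtain e where e: "\<forall>V\<in>S. ge V 1 (e V - 1) \<and> (\<forall>W'\<in>S-{V}. ge W' 1 (e V))" by metis
  have "\<forall>V\<in>S. \<exists>a. (\<forall>w\<in>W. a w \<in> EE) \<and> e V = (\<Sum>w\<in>W. a w * w)"
  proof
    fix V assume "V \<in> S"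
    have "e V \<in> spn EE W" using W(2) by blast
    then show "\<exists>a. (\<forall>w\<in>W. a w \<in> EE) \<and> e V = (\<Sum>w\<in>W. a w * w)" unfolding spn_def by blast
  qed
  then obtain a where a: "\<forall>V\<in>S. (\<forall>w\<in>W. a V w \<in> EE) \<and> e V = (\<Sum>w\<in>W. a V w * w)" by metis
  have "\<exists>c. (\<forall>V\<in>S. c V \<in> EE) \<and> (\<exists>V\<in>S. c V \<noteq> 0) \<and> (\<forall>w\<in>W. (\<Sum>V\<in>S. c V * a V w) = 0)"
    by (rule lin_dep[OF EE_sub W(1) S(1)]) (use S(2) a in auto)
  then obtain c where c: "\<forall>V\<in>S. c V \<in> EE" "\<exists>V\<in>S. c V \<noteq> 0" "\<forall>w\<in>W. (\<Sum>V\<in>S. c V * a V w) = 0"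
    by blast
  have sum0: "(\<Sum>V\<in>S. c V * e V) = 0"
  proof -
    have "(\<Sum>V\<in>S. c V * e V) = (\<Sum>V\<in>S. \<Sum>w\<in>W. c V * a V w * w)"
      by (rule sum.cong) (use a in \<open>auto simp: sum_distrib_left mult.assoc\<close>)
    also have "\<dots> = (\<Sum>w\<in>W. \<Sum>V\<in>S. c V * a V w * w)" by (rule sum.swap)
    also have "\<dots> = (\<Sum>w\<in>W. (\<Sum>V\<in>S. c V * a V w) * w)" by (simp add: sum_distrib_right)
    also have "\<dots> = 0" using c(3) by simp
    finally show ?thesis .
  qed
  define J where "J = {V\<in>S. c V \<noteq> 0}"
  have fJ: "finite J" "J \<noteq> {}" using S(1) c(2) by (auto simp: J_def)
  have "\<forall>V\<in>J. \<exists>k. \<forall>V'\<in>C. vv V' (c V) = k" using hyp c(1) by (auto simp: J_def)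
  then obtain kk where kk: "\<forall>V\<in>J. \<forall>V'\<in>C. vv V' (c V) = kk V" by metis
  define m where "m = Min (kk ` J)"
  have "m \<in> kk ` J" unfolding m_def using fJ by (intro Min_in) auto
  then obtain V1 where V1: "V1 \<in> J" "kk V1 = m" by blast
  have mle: "m \<le> kk V" if "V \<in> J" for V unfolding m_def using fJ that by (intro Min_le) auto
  have V1S: "V1 \<in> S" and V1C: "V1 \<in> C" and cV1: "c V1 \<noteq> 0" using V1(1) S(3) by (auto simp: J_def)
  have V1D: "V1 \<in> Dp" using V1C C by blast
  have eV1: "ge V1 1 (e V1 - 1)" using e V1S by blast
  have "1 + (e V1 - 1) \<noteq> 0 \<and> vv V1 (1 + (e V1 - 1)) = vv V1 1"
    using vv_dom[OF V1D one_neq_zero eV1] vv_1[OF V1D] by simp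
  then have e1: "e V1 \<noteq> 0" "vv V1 (e V1) = 0" using vv_1[OF V1D] by auto
  define t where "t = c V1 * e V1"
  have t0: "t \<noteq> 0" using cV1 e1 by (simp add: t_def)
  have vt: "vv V1 t = m" using vv_mult[OF V1D cV1 e1(1)] e1 kk V1 V1C by (simp add: t_def)
  have rest: "ge V1 (m + 1) (\<Sum>V\<in>S-{V1}. c V * e V)"
  proof (rule ge_sum[OF V1D])
    fix V assume V: "V \<in> S - {V1}"
    show "ge V1 (m + 1) (c V * e V)"
    proof (cases "c V = 0")
      case True then show ?thesis by (simp add: ge_0)
    next
      case False
      then have VJ: "V \<in> J" using V by (simp add: J_def)
      have "ge V1 (kk V) (c V)" using kk VJ V1C ge_self[of V1 "c V"] by metis
      moreover have "ge V1 1 (e V)" using e V V1S by blast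
      ultimately have "ge V1 (kk V + 1) (c V * e V)" by (rule ge_mult[OF V1D])
      then show ?thesis using mle[OF VJ] ge_mono by (metis add_right_mono)
    qed
  qed
  have "t + (\<Sum>V\<in>S-{V1}. c V * e V) \<noteq> 0" using vv_dom(1)[OF V1D t0 rest] vt by simp
  moreover have "(\<Sum>V\<in>S. c V * e V) = t + (\<Sum>V\<in>S-{V1}. c V * e V)"
    unfolding t_def using sum.remove[OF S(1) V1S] .
  ultimately show False using sum0 by simp
qed

lemma Dp_finite: "finite Dp"
proof -
  have "finite {V\<in>Dp. f \<in> V}"
  proof (rule class_finite)
    show "\<forall>c\<in>EE. c \<noteq> 0 \<longrightarrow> (\<exists>k. \<forall>V\<in>{V\<in>Dp. f \<in> V}. vv V c = k)"
    proof (intro ballI impI)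
      fix c assume "c \<in> EE" "c \<noteq> 0"
      then obtain k where "\<forall>V\<in>Dp. f \<in> V \<longrightarrow> vv V c = k" using EE_val(1) by blast
      then show "\<exists>k. \<forall>V\<in>{V\<in>Dp. f \<in> V}. vv V c = k" by auto
    qed
  qed auto
  moreover have "finite {V\<in>Dp. f \<notin> V}"
  proof (rule class_finite)
    show "\<forall>c\<in>EE. c \<noteq> 0 \<longrightarrow> (\<exists>k. \<forall>V\<in>{V\<in>Dp. f \<notin> V}. vv V c = k)"
    proof (intro ballI impI)
      fix c assume "c \<in> EE" "c \<noteq> 0"
      then obtain k where "\<forall>V\<in>Dp. f \<notin> V \<longrightarrow> vv V c = k" using EE_val(2) by blast
      then show "\<exists>k. \<forall>V\<in>{V\<in>Dp. f \<notin> V}. vv V c = k" by auto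
    qed
  qed auto
  moreover have "Dp = {V\<in>Dp. f \<in> V} \<union> {V\<in>Dp. f \<notin> V}" by blast
  ultimately show ?thesis by (metis finite_Un)
qed

end

context setting begin

abbreviation "D \<equiv> Dset F f"

lemma D_sub: "D \<subseteq> Dp"
proof
  fix V assume V: "V \<in> D"
  then have vr: "valuation_ring V" and FV: "F \<subseteq> V" and ne: "\<not> val_even V f"
    by (auto simp: Dset_def curve_points_def)
  have fnu: "f \<notin> vr_units V"
  proof
    assume "f \<in> vr_units V"
    then have "val_even V f" unfolding val_even_def by (intro exI[of _ 1]) simp
    then show False using ne by simp
  qed
  have "h \<in> max_ideal V"
  proof (cases "f \<in> V")
    case True
    then have fm: "f \<in> max_ideal V" using fnu in_V_cases[OF vr] by blast
    have u: "1 + f \<in> vr_units V" using unit_plus_max[OF vr units_1[OF vr] fm] .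
    have "inverse ((1 + f)^2) \<in> V" using units_inverse[OF vr units_power[OF vr u]] units_in[OF vr] by blast
    then have "inverse ((1 + f)^2) * f \<in> max_ideal V" using max_mult[OF vr _ fm] by blast
    then show ?thesis by (simp add: h_def divide_inverse mult.commute)
  next
    case False
    have "inverse f \<in> V" using vr_total[OF vr f_nz] False by auto
    then have im: "inverse f \<in> max_ideal V" using False max_iff[OF vr] by simp
    have u: "1 + inverse f \<in> vr_units V" using unit_plus_max[OF vr units_1[OF vr] im] .
    have "inverse ((1 + inverse f)^2) \<in> V" using units_inverse[OF vr units_power[OF vr u]] units_in[OF vr] by blast
    then have "inverse ((1 + inverse f)^2) * inverse f \<in> max_ideal V" using max_mult[OF vr _ im] by blast
    moreover have "inverse ((1 + inverse f)^2) * inverse f = h"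
      using f_nz f1_nz by (simp add: h_def field_simps power2_eq_square)
    ultimately show ?thesis by simp
  qed
  then show "V \<in> Dp" using vr FV by (simp add: Dp_def)
qed

lemma D_finite: "finite D" using finite_subset[OF D_sub Dp_finite] .

lemma even_iff:
  assumes V: "V \<in> Dp" and y: "y \<noteq> 0"
  shows "val_even V y \<longleftrightarrow> (\<exists>g. g \<noteq> 0 \<and> vv V y = 2 * vv V g)"
proof
  assume "val_even V y"
  then obtain g where g: "g \<noteq> 0" "y * inverse (g ^ 2) \<in> vr_units V" unfolding val_even_def by blast
  have "vv V (y * inverse (g ^ 2)) = 0" using vv_unit[OF V g(2)] .
  then have "vv V y - 2 * vv V g = 0"
    using vv_mult[OF V y, of "inverse (g^2)"] vv_inverse[OF V, of "g^2"] vv_power[OF V g(1), of 2] g(1) by simp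
  then show "\<exists>g. g \<noteq> 0 \<and> vv V y = 2 * vv V g" using g(1) by (intro exI[of _ g]) simp
next
  assume "\<exists>g. g \<noteq> 0 \<and> vv V y = 2 * vv V g"
  then obtain g where g: "g \<noteq> 0" "vv V y = 2 * vv V g" by blast
  have "vv V (y * inverse (g ^ 2)) = 0"
    using vv_mult[OF V y, of "inverse (g^2)"] vv_inverse[OF V, of "g^2"] vv_power[OF V g(1), of 2] g by simp
  then have "y * inverse (g ^ 2) \<in> vr_units V" using vv_zero_iff[OF V] y g(1) by simp
  then show "val_even V y" unfolding val_even_def using g(1) by blast
qed

lemma one_odd:
  assumes V: "V \<in> D" and g: "g \<noteq> 0"
  shows "2 * vv V g \<noteq> 1"
proof
  assume g1: "2 * vv V g = 1"
  have VD: "V \<in> Dp" using V D_sub by blast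
  have ne: "\<not> val_even V f" using V by (simp add: Dset_def)
  show False
  proof (cases "f \<in> V")
    case True
    have "vv V (f / h) = 0" using vv_unit[OF VD Dp_0(3)[OF VD True]] .
    then have "vv V f = 1" using vv_divide[OF VD f_nz h_nz] vv_h[OF VD] by simp
    then have "val_even V f" using even_iff[OF VD f_nz] g g1 by auto
    then show False using ne by simp
  next
    case False
    have "vv V (f * h) = 0" using vv_unit[OF VD Dp_inf(2)[OF VD False]] .
    then have "vv V f = -1" using vv_mult[OF VD f_nz h_nz] vv_h[OF VD] by simp
    moreover have "vv V (inverse g) = - vv V g" using vv_inverse[OF VD g] .
    ultimately have "vv V f = 2 * vv V (inverse g)" using g1 by simp
    moreover have "inverse g \<noteq> 0" using g by simp
    ultimately have "val_even V f" using even_iff[OF VD f_nz] by blast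
    then show False using ne by simp
  qed
qed

lemma thetabar_sub: assumes y: "y \<in> Theta_bar F f" and V: "V \<in> D" shows "y \<in> max_ideal V"
proof (rule ccontr)
  assume n: "y \<notin> max_ideal V"
  have vr: "valuation_ring V" using V by (simp add: Dset_def curve_points_def)
  have y0: "y \<noteq> 0" "inverse y \<notin> Theta F f" "inverse y - 1 \<notin> Theta F f"
    using y by (auto simp: Theta_bar_def)
  show False
  proof (cases "y \<in> V")
    case True
    then have "y \<in> vr_units V" using n in_V_cases[OF vr] by blast
    then have "inverse y \<in> vr_units V" using units_inverse[OF vr] by blast
    then have "inverse y \<in> unit_squares V" unfolding unit_squares_def by (intro CollectI exI[of _ "inverse y"] exI[of _ 1]) simp
    then have "inverse y \<in> Theta F f" using V by (auto simp: Theta_def)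
    then show False using y0 by simp
  next
    case False
    have "inverse y \<in> V" using vr_total[OF vr y0(1)] False by auto
    then have im: "inverse y \<in> max_ideal V" using False max_iff[OF vr] by simp
    have "- 1 + inverse y \<in> vr_units V" using unit_plus_max[OF vr units_uminus[OF vr units_1[OF vr]] im] .
    then have "inverse y - 1 \<in> vr_units V" by simp
    then have "inverse y - 1 \<in> unit_squares V" unfolding unit_squares_def by (intro CollectI exI[of _ "inverse y - 1"] exI[of _ 1]) simp
    then have "inverse y - 1 \<in> Theta F f" using V by (auto simp: Theta_def)
    then show False using y0 by simp
  qed
qed

lemma thetabar_intro:
  assumes y: "y \<noteq> 0" and loc: "\<forall>V\<in>D. y \<in> max_ideal V \<and> \<not> val_even V y"
  shows "y \<in> Theta_bar F f"
proof -
  have A: "inverse y \<notin> unit_squares V" if V: "V \<in> D" for V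
  proof
    assume "inverse y \<in> unit_squares V"
    then obtain u g where ug: "u \<in> vr_units V" "g \<noteq> 0" "inverse y = u * g ^ 2" unfolding unit_squares_def by blast
    have vr: "valuation_ring V" using V by (simp add: Dset_def curve_points_def)
    have "u = inverse y / g ^ 2" using ug(3) ug(2) by simp
    then have "inverse u = y * g ^ 2" using y ug(2) by (simp add: inverse_mult_distrib divide_inverse)
    moreover have "y * inverse (inverse g ^ 2) = y * g ^ 2" by (simp add: power_inverse)
    ultimately have "y * inverse (inverse g ^ 2) = inverse u" by simp
    then have "val_even V y" unfolding val_even_def using units_inverse[OF vr ug(1)] ug(2)
      by (intro exI[of _ "inverse g"]) simp
    then show False using loc V by blast
  qed
  have B: "inverse y - 1 \<notin> unit_squares V" if V: "V \<in> D" for V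
  proof
    assume "inverse y - 1 \<in> unit_squares V"
    then obtain u g where ug: "u \<in> vr_units V" "g \<noteq> 0" "inverse y - 1 = u * g ^ 2" unfolding unit_squares_def by blast
    have vr: "valuation_ring V" using V by (simp add: Dset_def curve_points_def)
    have ym: "y \<in> max_ideal V" using loc V by blast
    have "1 + (- y) \<in> vr_units V" using unit_plus_max[OF vr units_1[OF vr] max_uminus[OF vr ym]] .
    then have u1: "(1 - y) / u \<in> vr_units V" using units_divide[OF vr _ ug(1)] by simp
    have u0: "u \<noteq> 0" using units_nz[OF vr ug(1)] .
    have "y * (inverse y - 1) = 1 - y" using y by (simp add: right_diff_distrib)
    then have "(1 - y) = y * (u * g ^ 2)" using ug(3) by simp
    then have "(1 - y) / u = y * g ^ 2" using u0 by simp
    moreover have "y * inverse (inverse g ^ 2) = y * g ^ 2" by (simp add: power_inverse)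
    ultimately have "y * inverse (inverse g ^ 2) = (1 - y) / u" by simp
    then have "val_even V y" unfolding val_even_def using u1 ug(2) by (intro exI[of _ "inverse g"]) simp
    then show False using loc V by blast
  qed
  show ?thesis unfolding Theta_bar_def Theta_def using y A B by blast
qed

end

context setting begin

lemma local_target:
  assumes V: "V \<in> D" and x: "x \<noteq> 0" "x \<in> max_ideal V"
  shows "\<exists>z. z \<noteq> 0 \<and> z - x \<noteq> 0 \<and> vv V z > 0 \<and> vv V (z - x) > 0 \<and>
     \<not> (\<exists>g. g \<noteq> 0 \<and> vv V z = 2 * vv V g) \<and> \<not> (\<exists>g. g \<noteq> 0 \<and> vv V (z - x) = 2 * vv V g)"
proof -
  have VD: "V \<in> Dp" using V D_sub by blast
  define b where "b = vv V x"
  have bpos: "b > 0" using vv_pos_iff[OF VD x(1)] x(2) by (simp add: b_def)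
  have mx: "- x \<noteq> 0" "vv V (- x) = b" using x vv_uminus[OF VD] by (auto simp: b_def)
  show ?thesis
  proof (cases "\<exists>g. g \<noteq> 0 \<and> vv V x = 2 * vv V g")
    case False
    define z where "z = h * x ^ 2"
    have z0: "z \<noteq> 0" using h_nz x by (simp add: z_def)
    have vz: "vv V z = 1 + 2 * b"
      using vv_mult[OF VD h_nz, of "x^2"] vv_h[OF VD] vv_power[OF VD x(1), of 2] x(1) by (simp add: z_def b_def)
    have "- x + z \<noteq> 0 \<and> vv V (- x + z) = vv V (- x)"
      using vv_dom[OF VD mx(1) ge_self[of V z]] vz mx(2) bpos by simp
    then have zx: "z - x \<noteq> 0" "vv V (z - x) = b" using mx(2) by (simp_all add: add.commute)
    have oz: "\<not> (\<exists>g. g \<noteq> 0 \<and> vv V z = 2 * vv V g)"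
    proof
      assume "\<exists>g. g \<noteq> 0 \<and> vv V z = 2 * vv V g"
      then obtain g where g: "g \<noteq> 0" "vv V z = 2 * vv V g" by blast
      have "vv V (g / x) = vv V g - b" using vv_divide[OF VD g(1) x(1)] by (simp add: b_def)
      then have "2 * vv V (g / x) = 1" using g(2) vz by simp
      then show False using one_odd[OF V, of "g / x"] g(1) x(1) by simp
    qed
    show ?thesis using z0 zx vz bpos oz False by (intro exI[of _ z]) (simp add: b_def)
  next
    case True
    then obtain g0 where g0: "g0 \<noteq> 0" "b = 2 * vv V g0" by (auto simp: b_def)
    obtain p q where pq: "quotient_of b = (p, q)" by (cases "quotient_of b")
    have q0: "q > 0" using quotient_of_denom_pos[OF pq] .
    have bpq: "b = of_int p / of_int q" using quotient_of_div[OF pq] .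
    have cop: "coprime q p" using quotient_of_coprime[OF pq] by (simp add: coprime_commute)
    have p0: "p > 0" using bpos bpq q0 by (simp add: zero_less_divide_iff)
    obtain u v where uv: "u * q + v * p = 1"
      using bezout_int[of q p] cop by (auto simp: coprime_iff_gcd_eq_1)
    define z where "z = h powi u * x powi v"
    have z0: "z \<noteq> 0" using h_nz x(1) by (simp add: z_def power_int_not_zero)
    have vz: "vv V z = 1 / of_int q"
    proof -
      have "vv V z = of_int u + of_int v * b"
        using vv_mult[OF VD, of "h powi u" "x powi v"] vv_powi[OF VD h_nz, of u] vv_powi[OF VD x(1), of v]
          vv_h[OF VD] h_nz x(1) by (simp add: z_def b_def power_int_not_zero)
      also have "\<dots> = (of_int u * of_int q + of_int v * of_int p) / of_int q"
        using q0 bpq by (simp add: field_simps)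
      also have "\<dots> = 1 / of_int q" using uv by (metis of_int_1 of_int_add of_int_mult)
      finally show ?thesis .
    qed
    have oz: "\<not> (\<exists>g. g \<noteq> 0 \<and> vv V z = 2 * vv V g)"
    proof
      assume "\<exists>g. g \<noteq> 0 \<and> vv V z = 2 * vv V g"
      then obtain g where g: "g \<noteq> 0" "vv V z = 2 * vv V g" by blast
      have "vv V (g powi q) = of_int q * vv V g" using vv_powi[OF VD g(1)] .
      then have "2 * vv V (g powi q) = 1" using g(2) vz q0 by (simp add: field_simps)
      then show False using one_odd[OF V, of "g powi q"] g(1) by (simp add: power_int_not_zero)
    qed
    have "p \<noteq> 1"
    proof
      assume "p = 1"
      then have "vv V z = b" using vz bpq by simp
      then show False using oz g0 by auto
    qed
    then have "p \<ge> 2" using p0 by simp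
    then have lt: "vv V z < b" using vz bpq q0 by (simp add: divide_strict_right_mono)
    have "z + - x \<noteq> 0 \<and> vv V (z + - x) = vv V z"
      using vv_dom[OF VD z0 ge_self[of V "- x"]] mx(2) lt by simp
    then have zx: "z - x \<noteq> 0" "vv V (z - x) = vv V z" by simp_all
    have zpos: "vv V z > 0" using vz q0 by simp
    show ?thesis using z0 zx zpos oz by (intro exI[of _ z]) simp
  qed
qed

lemma h_thetabar: "h \<in> Theta_bar F f"
proof (rule thetabar_intro[OF h_nz], intro ballI conjI)
  fix V assume V: "V \<in> D"
  have VD: "V \<in> Dp" using V D_sub by blast
  show "h \<in> max_ideal V" using DpD(3)[OF VD] .
  show "\<not> val_even V h"
  proof
    assume "val_even V h"
    then obtain g where "g \<noteq> 0" "vv V h = 2 * vv V g" using even_iff[OF VD h_nz] by blast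
    then show False using one_odd[OF V] vv_h[OF VD] by simp
  qed
qed

lemma part1: "ideal_a F f = set_diff (Theta_bar F f) (Theta_bar F f)"
proof
  show "set_diff (Theta_bar F f) (Theta_bar F f) \<subseteq> ideal_a F f"
  proof
    fix x assume "x \<in> set_diff (Theta_bar F f) (Theta_bar F f)"
    then obtain a b where ab: "x = a - b" "a \<in> Theta_bar F f" "b \<in> Theta_bar F f"
      unfolding set_diff_def by blast
    have "x \<in> max_ideal V" if V: "V \<in> D" for V
    proof -
      have vr: "valuation_ring V" using V by (simp add: Dset_def curve_points_def)
      show ?thesis using ab max_diff[OF vr thetabar_sub[OF ab(2) V] thetabar_sub[OF ab(3) V]] by simp
    qed
    then show "x \<in> ideal_a F f" unfolding ideal_a_def by blast
  qed
next
  show "ideal_a F f \<subseteq> set_diff (Theta_bar F f) (Theta_bar F f)"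
  proof
    fix x assume xa: "x \<in> ideal_a F f"
    then have xm: "\<forall>V\<in>D. x \<in> max_ideal V" unfolding ideal_a_def by blast
    show "x \<in> set_diff (Theta_bar F f) (Theta_bar F f)"
    proof (cases "x = 0")
      case True
      then show ?thesis unfolding set_diff_def using h_thetabar by auto
    next
      case x0: False
      show ?thesis
      proof (cases "D = {}")
        case True
        have TB: "Theta_bar F f = {y. y \<noteq> 0}" using True by (auto simp: Theta_bar_def Theta_def)
        show ?thesis
        proof (cases "x + f = 0")
          case False
          then have "x = (x + f) - f" "x + f \<in> Theta_bar F f" "f \<in> Theta_bar F f" using f_nz TB by auto
          then show ?thesis unfolding set_diff_def by blast
        next
          case True
          then have "x = 1 - (f + 1)" by (simp add: algebra_simps eq_neg_iff_add_eq_0)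
          moreover have "(1::'a) \<in> Theta_bar F f" "f + 1 \<in> Theta_bar F f" using f1_nz TB by (auto simp: add.commute)
          ultimately show ?thesis unfolding set_diff_def by blast
        qed
      next
        case Dne: False
        have "\<forall>V\<in>D. \<exists>z. z \<noteq> 0 \<and> z - x \<noteq> 0 \<and> vv V z > 0 \<and> vv V (z - x) > 0 \<and>
          \<not> (\<exists>g. g \<noteq> 0 \<and> vv V z = 2 * vv V g) \<and> \<not> (\<exists>g. g \<noteq> 0 \<and> vv V (z - x) = 2 * vv V g)"
          using local_target x0 xm by blast
        then obtain zt where zt: "\<forall>V\<in>D. zt V \<noteq> 0 \<and> zt V - x \<noteq> 0 \<and> vv V (zt V) > 0 \<and> vv V (zt V - x) > 0 \<and>
          \<not> (\<exists>g. g \<noteq> 0 \<and> vv V (zt V) = 2 * vv V g) \<and> \<not> (\<exists>g. g \<noteq> 0 \<and> vv V (zt V - x) = 2 * vv V g)"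
          by metis
        obtain \<xi> where xi: "\<forall>V\<in>D. ge V (max (vv V (zt V)) (vv V (zt V - x)) + 1) (\<xi> - zt V)"
          using approx[OF D_finite D_sub, where r = "\<lambda>V. max (vv V (zt V)) (vv V (zt V - x)) + 1" and t = zt] by blast
        have loc: "\<xi> \<noteq> 0 \<and> vv V \<xi> = vv V (zt V) \<and> \<xi> - x \<noteq> 0 \<and> vv V (\<xi> - x) = vv V (zt V - x)"
          if V: "V \<in> D" for V
        proof -
          have VD: "V \<in> Dp" using V D_sub by blast
          have z: "zt V \<noteq> 0" "zt V - x \<noteq> 0" using zt V by auto
          have g1: "ge V (max (vv V (zt V)) (vv V (zt V - x)) + 1) (\<xi> - zt V)" using xi V by blast
          have "zt V + (\<xi> - zt V) \<noteq> 0 \<and> vv V (zt V + (\<xi> - zt V)) = vv V (zt V)"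
            using vv_dom[OF VD z(1) g1] by simp
          moreover have "(zt V - x) + (\<xi> - zt V) \<noteq> 0 \<and> vv V ((zt V - x) + (\<xi> - zt V)) = vv V (zt V - x)"
            using vv_dom[OF VD z(2) g1] by simp
          moreover have "zt V + (\<xi> - zt V) = \<xi>" "(zt V - x) + (\<xi> - zt V) = \<xi> - x" by simp_all
          ultimately show ?thesis by simp
        qed
        obtain V0 where "V0 \<in> D" using Dne by blast
        then have nz: "\<xi> \<noteq> 0" "\<xi> - x \<noteq> 0" using loc by auto
        have good: "\<forall>V\<in>D. y \<in> max_ideal V \<and> \<not> val_even V y"
          if y: "y \<noteq> 0" and yv: "\<forall>V\<in>D. vv V y > 0 \<and> \<not> (\<exists>g. g \<noteq> 0 \<and> vv V y = 2 * vv V g)" for y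
        proof
          fix V assume V: "V \<in> D"
          have VD: "V \<in> Dp" using V D_sub by blast
          show "y \<in> max_ideal V \<and> \<not> val_even V y"
            using vv_pos_iff[OF VD y] even_iff[OF VD y] yv V by blast
        qed
        have "\<xi> \<in> Theta_bar F f"
          by (rule thetabar_intro[OF nz(1) good[OF nz(1)]]) (use loc zt in auto)
        moreover have "\<xi> - x \<in> Theta_bar F f"
          by (rule thetabar_intro[OF nz(2) good[OF nz(2)]]) (use loc zt in auto)
        moreover have "x = \<xi> - (\<xi> - x)" by simp
        ultimately show ?thesis unfolding set_diff_def by blast
      qed
    qed
  qed
qed

lemma part2: "ring_R F f = {r. \<forall>x\<in>ideal_a F f. r * x \<in> ideal_a F f}"
proof
  show "ring_R F f \<subseteq> {r. \<forall>x\<in>ideal_a F f. r * x \<in> ideal_a F f}"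
  proof (intro subsetI CollectI ballI)
    fix r x assume r: "r \<in> ring_R F f" and x: "x \<in> ideal_a F f"
    have "r * x \<in> max_ideal V" if V: "V \<in> D" for V
    proof -
      have vr: "valuation_ring V" using V by (simp add: Dset_def curve_points_def)
      have "r \<in> V" "x \<in> max_ideal V" using r x V by (auto simp: ring_R_def ideal_a_def)
      then show ?thesis using max_mult[OF vr] by blast
    qed
    then show "r * x \<in> ideal_a F f" unfolding ideal_a_def by blast
  qed
next
  show "{r. \<forall>x\<in>ideal_a F f. r * x \<in> ideal_a F f} \<subseteq> ring_R F f"
  proof
    fix r assume "r \<in> {r. \<forall>x\<in>ideal_a F f. r * x \<in> ideal_a F f}"
    then have rp: "\<forall>x\<in>ideal_a F f. r * x \<in> ideal_a F f" by simp
    have "r \<in> V0" if V0: "V0 \<in> D" for V0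
    proof (rule ccontr)
      assume rn: "r \<notin> V0"
      have V0D: "V0 \<in> Dp" using V0 D_sub by blast
      have r0: "r \<noteq> 0" using rn vr_0[OF DpD(1)[OF V0D]] by auto
      have rneg: "vv V0 r < 0" using vv_nonneg_iff[OF V0D r0] rn by simp
      define t where "t V = (if V = V0 then inverse r else h)" for V
      have t0: "t V \<noteq> 0" for V using r0 h_nz by (simp add: t_def)
      have tpos: "vv V (t V) > 0" if "V \<in> D" for V
        using that vv_h vv_inverse[OF V0D r0] rneg D_sub by (auto simp: t_def)
      obtain \<xi> where xi: "\<forall>V\<in>D. ge V (vv V (t V) + 1) (\<xi> - t V)"
        using approx[OF D_finite D_sub, where r = "\<lambda>V. vv V (t V) + 1" and t = t] by blast
      have vxi: "\<xi> \<noteq> 0 \<and> vv V \<xi> = vv V (t V)" if V: "V \<in> D" for V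
      proof -
        have VD: "V \<in> Dp" using V D_sub by blast
        have g1: "ge V (vv V (t V) + 1) (\<xi> - t V)" using xi V by blast
        have "t V + (\<xi> - t V) \<noteq> 0 \<and> vv V (t V + (\<xi> - t V)) = vv V (t V)"
          using vv_dom[OF VD t0[of V] g1] by simp
        then show ?thesis by simp
      qed
      have "\<xi> \<in> max_ideal V" if V: "V \<in> D" for V
      proof -
        have VD: "V \<in> Dp" using V D_sub by blast
        have "vv V \<xi> > 0" "\<xi> \<noteq> 0" using vxi[OF V] tpos[OF V] by auto
        then show ?thesis using vv_pos_iff[OF VD] by blast
      qed
      then have "\<xi> \<in> ideal_a F f" unfolding ideal_a_def by blast
      then have "r * \<xi> \<in> ideal_a F f" using rp by blast
      then have "r * \<xi> \<in> max_ideal V0" using V0 unfolding ideal_a_def by blast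
      moreover have "vv V0 (r * \<xi>) = 0"
        using vv_mult[OF V0D r0] vxi[OF V0] vv_inverse[OF V0D r0] by (simp add: t_def)
      moreover have "r * \<xi> \<noteq> 0" using r0 vxi[OF V0] by simp
      ultimately show False using vv_pos_iff[OF V0D] by auto
    qed
    then show "r \<in> ring_R F f" unfolding ring_R_def by blast
  qed
qed

end

lemma indep_nz:
  assumes k: "subfield k" and ind: "alg_indep k (f # ts)"
  shows "f \<noteq> 0" "1 + f \<noteq> 0"
proof -
  define e0 :: "nat \<Rightarrow> nat" where "e0 = (\<lambda>i. if i = 0 then 1 else 0)"
  have e00: "e0 \<noteq> (\<lambda>_. 0)" by (auto simp: e0_def fun_eq_iff)
  have pe0: "(\<Prod>i<length (f # ts). (f # ts) ! i ^ e0 i) = f"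
  proof -
    have "(\<Prod>i<length (f # ts). (f # ts) ! i ^ e0 i) = (\<Prod>i<Suc (length ts). (f # ts) ! i ^ e0 i)" by simp
    also have "\<dots> = (f # ts) ! 0 ^ e0 0 * (\<Prod>i<length ts. (f # ts) ! Suc i ^ e0 (Suc i))"
      by (rule prod.lessThan_Suc_shift)
    also have "\<dots> = f" by (simp add: e0_def)
    finally show ?thesis .
  qed
  have p0: "(\<Prod>i<length (f # ts). (f # ts) ! i ^ (0::nat)) = 1" by simp
  have vars_e0: "\<forall>i\<ge>length (f # ts). e0 i = 0" by (auto simp: e0_def)
  show "f \<noteq> 0"
  proof
    assume f0: "f = 0"
    define c where "c = (\<lambda>\<alpha>. if \<alpha> = e0 then (1::'a) else 0)"
    have supp: "{\<alpha>. c \<alpha> \<noteq> 0} = {e0}" by (auto simp: c_def)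
    have H: "finite {\<alpha>. c \<alpha> \<noteq> 0} \<and> (\<forall>\<alpha>. c \<alpha> \<in> k) \<and>
        (\<forall>\<alpha>. c \<alpha> \<noteq> 0 \<longrightarrow> (\<forall>i\<ge>length (f # ts). \<alpha> i = 0)) \<and>
        (\<Sum>\<alpha>\<in>{\<alpha>. c \<alpha> \<noteq> 0}. c \<alpha> * (\<Prod>i<length (f # ts). (f # ts) ! i ^ \<alpha> i)) = 0 \<longrightarrow> (\<forall>\<alpha>. c \<alpha> = 0)"
      using ind unfolding alg_indep_def by blast
    have "\<forall>\<alpha>. c \<alpha> = 0"
      by (rule mp[OF H]) (use supp vars_e0 pe0 f0 subfield_0[OF k] subfield_1[OF k] in \<open>auto simp: c_def\<close>)
    then show False by (auto simp: c_def dest: spec[of _ e0])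
  qed
  show "1 + f \<noteq> 0"
  proof
    assume f1: "1 + f = 0"
    define c where "c = (\<lambda>\<alpha>. if \<alpha> = e0 \<or> \<alpha> = (\<lambda>_. 0) then (1::'a) else 0)"
    have supp: "{\<alpha>. c \<alpha> \<noteq> 0} = {e0, (\<lambda>_. 0)}" by (auto simp: c_def)
    have s: "(\<Sum>\<alpha>\<in>{e0, (\<lambda>_. 0)}. c \<alpha> * (\<Prod>i<length (f # ts). (f # ts) ! i ^ \<alpha> i)) = f + 1"
      using e00 pe0 p0 by (simp add: c_def)
    have H: "finite {\<alpha>. c \<alpha> \<noteq> 0} \<and> (\<forall>\<alpha>. c \<alpha> \<in> k) \<and>
        (\<forall>\<alpha>. c \<alpha> \<noteq> 0 \<longrightarrow> (\<forall>i\<ge>length (f # ts). \<alpha> i = 0)) \<and>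
        (\<Sum>\<alpha>\<in>{\<alpha>. c \<alpha> \<noteq> 0}. c \<alpha> * (\<Prod>i<length (f # ts). (f # ts) ! i ^ \<alpha> i)) = 0 \<longrightarrow> (\<forall>\<alpha>. c \<alpha> = 0)"
      using ind unfolding alg_indep_def by blast
    have "\<forall>\<alpha>. c \<alpha> = 0"
      by (rule mp[OF H]) (use supp vars_e0 s f1 subfield_0[OF k] subfield_1[OF k] in \<open>auto simp: c_def add.commute\<close>)
    then show False by (auto simp: c_def dest: spec[of _ e0])
  qed
qed

lemma alg_from_dep:
  assumes F: "subfield F" and k: "subfield k" and kF: "k \<subseteq> F" and tsF: "set ts \<subseteq> F"
    and ind: "alg_indep k (f # ts)"
    and dep: "\<not> alg_indep k ((f # ts) @ [y])"
  shows "\<exists>n P. (\<forall>j\<le>n. P j \<in> A0 F f) \<and> (\<exists>j\<le>n. P j \<noteq> 0) \<and> (\<Sum>j\<le>n. P j * y ^ j) = 0"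
proof -
  define xs where "xs = f # ts"
  define m where "m = length xs"
  have lenL: "length (xs @ [y]) = Suc m" by (simp add: m_def)
  obtain c where c: "finite {\<alpha>. c \<alpha> \<noteq> 0}" "\<forall>\<alpha>. c \<alpha> \<in> k"
    "\<forall>\<alpha>. c \<alpha> \<noteq> 0 \<longrightarrow> (\<forall>i\<ge>Suc m. \<alpha> i = 0)"
    "(\<Sum>\<alpha>\<in>{\<alpha>. c \<alpha> \<noteq> 0}. c \<alpha> * (\<Prod>i<Suc m. (xs @ [y]) ! i ^ \<alpha> i)) = 0"
    "\<not> (\<forall>\<alpha>. c \<alpha> = 0)"
    using dep unfolding alg_indep_def xs_def[symmetric] lenL by blast
  define Sp where "Sp = {\<alpha>. c \<alpha> \<noteq> 0}"
  define Q where "Q \<alpha> = (\<Prod>i<m. xs ! i ^ \<alpha> i)" for \<alpha> :: "nat \<Rightarrow> nat"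
  have prodsplit: "(\<Prod>i<Suc m. (xs @ [y]) ! i ^ \<alpha> i) = Q \<alpha> * y ^ \<alpha> m" for \<alpha>
  proof -
    have "(\<Prod>i<Suc m. (xs @ [y]) ! i ^ \<alpha> i) = (\<Prod>i<m. (xs @ [y]) ! i ^ \<alpha> i) * (xs @ [y]) ! m ^ \<alpha> m"
      by (rule prod.lessThan_Suc)
    moreover have "(\<Prod>i<m. (xs @ [y]) ! i ^ \<alpha> i) = Q \<alpha>"
      unfolding Q_def by (rule prod.cong) (auto simp: nth_append m_def)
    moreover have "(xs @ [y]) ! m = y" by (simp add: m_def)
    ultimately show ?thesis by simp
  qed
  have fSp: "finite Sp" and Spne: "Sp \<noteq> {}" using c(1,5) by (auto simp: Sp_def)
  define n where "n = Max ((\<lambda>\<alpha>. \<alpha> m) ` Sp)"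
  have le_n: "\<alpha> m \<le> n" if "\<alpha> \<in> Sp" for \<alpha> unfolding n_def using fSp that by (intro Max_ge) auto
  define P where "P j = (\<Sum>\<alpha>\<in>{\<alpha>\<in>Sp. \<alpha> m = j}. c \<alpha> * Q \<alpha>)" for j
  have "0 = (\<Sum>\<alpha>\<in>Sp. c \<alpha> * (Q \<alpha> * y ^ \<alpha> m))" using c(4) prodsplit by (simp add: Sp_def)
  also have "\<dots> = (\<Sum>j\<in>{..n}. \<Sum>\<alpha>\<in>{\<alpha>\<in>Sp. \<alpha> m = j}. c \<alpha> * (Q \<alpha> * y ^ \<alpha> m))"
    by (rule sum.group[symmetric]) (use fSp le_n in auto)
  also have "\<dots> = (\<Sum>j\<le>n. P j * y ^ j)"
  proof (rule sum.cong)
    fix j assume "j \<in> {..n}"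
    have "(\<Sum>\<alpha>\<in>{\<alpha>\<in>Sp. \<alpha> m = j}. c \<alpha> * (Q \<alpha> * y ^ \<alpha> m)) = (\<Sum>\<alpha>\<in>{\<alpha>\<in>Sp. \<alpha> m = j}. c \<alpha> * Q \<alpha> * y ^ j)"
      by (rule sum.cong) (auto simp: mult.assoc)
    then show "(\<Sum>\<alpha>\<in>{\<alpha>\<in>Sp. \<alpha> m = j}. c \<alpha> * (Q \<alpha> * y ^ \<alpha> m)) = P j * y ^ j"
      by (simp add: P_def sum_distrib_right)
  qed simp
  finally have sum0: "(\<Sum>j\<le>n. P j * y ^ j) = 0" by simp
  have xsA: "xs ! i \<in> A0 F f" if "i < m" for i
  proof (cases i)
    case 0 then show ?thesis using A0_f[OF F] by (simp add: xs_def)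
  next
    case (Suc l)
    then have "xs ! i \<in> set ts" using that by (simp add: xs_def m_def)
    then show ?thesis using tsF A0_const[OF F] by blast
  qed
  have QA: "Q \<alpha> \<in> A0 F f" for \<alpha> unfolding Q_def using xsA by (intro A0_prod[OF F] A0_power[OF F]) auto
  have PA: "P j \<in> A0 F f" for j
    unfolding P_def using QA c(2) kF A0_const[OF F] A0_mult[OF F] by (intro A0_sum[OF F]) blast
  have "\<exists>j\<le>n. P j \<noteq> 0"
  proof (rule ccontr)
    assume "\<not> (\<exists>j\<le>n. P j \<noteq> 0)"
    then have allz: "\<forall>j\<le>n. P j = 0" by simp
    obtain \<alpha>0 where a0: "\<alpha>0 \<in> Sp" using Spne by blast
    define j0 where "j0 = \<alpha>0 m"
    have j0n: "j0 \<le> n" using le_n[OF a0] by (simp add: j0_def)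
    define c' where "c' \<beta> = (if \<beta> m = 0 then c (\<beta>(m := j0)) else 0)" for \<beta> :: "nat \<Rightarrow> nat"
    let ?A = "{\<alpha>\<in>Sp. \<alpha> m = j0}"
    have S'eq: "{\<beta>. c' \<beta> \<noteq> 0} = (\<lambda>\<alpha>. \<alpha>(m := 0)) ` ?A"
    proof
      show "{\<beta>. c' \<beta> \<noteq> 0} \<subseteq> (\<lambda>\<alpha>. \<alpha>(m := 0)) ` ?A"
      proof
        fix \<beta> assume "\<beta> \<in> {\<beta>. c' \<beta> \<noteq> 0}"
        then have b: "\<beta> m = 0" "c (\<beta>(m := j0)) \<noteq> 0" by (auto simp: c'_def split: if_splits)
        have "\<beta> = (\<beta>(m := j0))(m := 0)" using b(1) by (auto simp: fun_eq_iff)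
        moreover have "\<beta>(m := j0) \<in> ?A" using b(2) by (simp add: Sp_def)
        ultimately show "\<beta> \<in> (\<lambda>\<alpha>. \<alpha>(m := 0)) ` ?A" by blast
      qed
      show "(\<lambda>\<alpha>. \<alpha>(m := 0)) ` ?A \<subseteq> {\<beta>. c' \<beta> \<noteq> 0}"
      proof
        fix \<beta> assume "\<beta> \<in> (\<lambda>\<alpha>. \<alpha>(m := 0)) ` ?A"
        then obtain \<alpha> where a: "\<alpha> \<in> Sp" "\<alpha> m = j0" "\<beta> = \<alpha>(m := 0)" by blast
        have "\<beta>(m := j0) = \<alpha>" using a by (auto simp: fun_eq_iff)
        then show "\<beta> \<in> {\<beta>. c' \<beta> \<noteq> 0}" using a by (simp add: c'_def Sp_def)
      qed
    qed
    have inj: "inj_on (\<lambda>\<alpha>. \<alpha>(m := 0)) ?A"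
    proof (rule inj_onI)
      fix \<alpha> \<alpha>' assume "\<alpha> \<in> ?A" "\<alpha>' \<in> ?A" "\<alpha>(m := 0) = \<alpha>'(m := 0)"
      then show "\<alpha> = \<alpha>'" by (auto simp: fun_eq_iff) (metis fun_upd_other)
    qed
    have Qeq: "Q (\<alpha>(m := 0)) = Q \<alpha>" for \<alpha> unfolding Q_def by (rule prod.cong) auto
    have c'eq: "c' (\<alpha>(m := 0)) = c \<alpha>" if "\<alpha> \<in> ?A" for \<alpha>
    proof -
      have "(\<alpha>(m := 0))(m := j0) = \<alpha>" using that by (auto simp: fun_eq_iff)
      then show ?thesis by (simp add: c'_def)
    qed
    have "(\<Sum>\<beta>\<in>{\<beta>. c' \<beta> \<noteq> 0}. c' \<beta> * (\<Prod>i<length (f # ts). (f # ts) ! i ^ \<beta> i))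
        = (\<Sum>\<beta>\<in>(\<lambda>\<alpha>. \<alpha>(m := 0)) ` ?A. c' \<beta> * Q \<beta>)"
      unfolding S'eq Q_def xs_def m_def by simp
    also have "\<dots> = (\<Sum>\<alpha>\<in>?A. c' (\<alpha>(m := 0)) * Q (\<alpha>(m := 0)))" by (rule sum.reindex[OF inj, unfolded comp_def])
    also have "\<dots> = (\<Sum>\<alpha>\<in>?A. c \<alpha> * Q \<alpha>)" by (rule sum.cong) (auto simp: c'eq Qeq)
    also have "\<dots> = P j0" by (simp add: P_def)
    also have "\<dots> = 0" using allz j0n by simp
    finally have s0: "(\<Sum>\<beta>\<in>{\<beta>. c' \<beta> \<noteq> 0}. c' \<beta> * (\<Prod>i<length (f # ts). (f # ts) ! i ^ \<beta> i)) = 0" .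
    have fin': "finite {\<beta>. c' \<beta> \<noteq> 0}" unfolding S'eq using fSp by simp
    have ck: "\<forall>\<beta>. c' \<beta> \<in> k" using c(2) subfield_0[OF k] by (simp add: c'_def)
    have vars: "\<forall>\<beta>. c' \<beta> \<noteq> 0 \<longrightarrow> (\<forall>i\<ge>length (f # ts). \<beta> i = 0)"
    proof (intro allI impI)
      fix \<beta> i assume b: "c' \<beta> \<noteq> 0" and i: "length (f # ts) \<le> i"
      then have b': "\<beta> m = 0" "c (\<beta>(m := j0)) \<noteq> 0" by (auto simp: c'_def split: if_splits)
      show "\<beta> i = 0"
      proof (cases "i = m")
        case True then show ?thesis using b' by simp
      next
        case False
        then have "i \<ge> Suc m" using i by (simp add: m_def xs_def)
        then have "(\<beta>(m := j0)) i = 0" using c(3) b'(2) by blast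
        then show ?thesis using False by simp
      qed
    qed
    have H: "finite {\<beta>. c' \<beta> \<noteq> 0} \<and> (\<forall>\<beta>. c' \<beta> \<in> k) \<and>
        (\<forall>\<beta>. c' \<beta> \<noteq> 0 \<longrightarrow> (\<forall>i\<ge>length (f # ts). \<beta> i = 0)) \<and>
        (\<Sum>\<beta>\<in>{\<beta>. c' \<beta> \<noteq> 0}. c' \<beta> * (\<Prod>i<length (f # ts). (f # ts) ! i ^ \<beta> i)) = 0 \<longrightarrow> (\<forall>\<beta>. c' \<beta> = 0)"
      using ind unfolding alg_indep_def by blast
    have "\<forall>\<beta>. c' \<beta> = 0" using mp[OF H] fin' ck vars s0 by blast
    moreover have "\<alpha>0 \<in> ?A" using a0 by (simp add: j0_def)
    ultimately show False using c'eq a0 by (force simp: Sp_def)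
  qed
  then show ?thesis using PA sum0 by blast
qed

theorem lemma4p6:
  fixes k0 :: "'a::field set" and f :: 'a and ts :: "'a list" and d e :: nat
  assumes "fg_field (UNIV :: 'a set)"
    and "CHAR('a) \<noteq> 2"
    and "kdim (UNIV :: 'a set) d" and "d > 2"
    and "global_subfield k0" and "rel_alg_closed k0"
    and "trdeg_in k0 (UNIV :: 'a set) (e + 1)" and "e > 0"
    and "length ts = e" and "alg_indep k0 (f # ts)"
    and "\<forall>t\<in>set ts. \<exists>s. t = s ^ 2"
  shows "ideal_a (gen_subfield (k0 \<union> set ts)) f
           = set_diff (Theta_bar (gen_subfield (k0 \<union> set ts)) f)
                      (Theta_bar (gen_subfield (k0 \<union> set ts)) f)
       \<and> ring_R (gen_subfield (k0 \<union> set ts)) f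
           = {r. \<forall>x\<in>ideal_a (gen_subfield (k0 \<union> set ts)) f.
                   r * x \<in> ideal_a (gen_subfield (k0 \<union> set ts)) f}"
proof -
  let ?F = "gen_subfield (k0 \<union> set ts)"
  have k0sub: "subfield k0" using assms(5) by (simp add: global_subfield_def fg_field_def)
  have Fsub: "subfield ?F" by (rule subfield_gen_subfield)
  have k0F: "k0 \<subseteq> ?F" and tsF: "set ts \<subseteq> ?F" using gen_subfield_sup[of "k0 \<union> set ts"] by auto
  have nz: "f \<noteq> 0" "1 + f \<noteq> 0" using indep_nz[OF k0sub assms(10)] by auto
  have alg: "\<exists>n P. (\<forall>j\<le>n. P j \<in> A0 ?F f) \<and> (\<exists>j\<le>n. P j \<noteq> 0) \<and> (\<Sum>j\<le>n. P j * y ^ j) = 0" for y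
  proof -
    have "\<not> (\<exists>xs. set xs \<subseteq> (UNIV :: 'a set) \<and> length xs = Suc (e + 1) \<and> alg_indep k0 xs)"
      using assms(7) unfolding trdeg_in_def by blast
    moreover have "length ((f # ts) @ [y]) = Suc (e + 1)" using assms(9) by simp
    ultimately have "\<not> alg_indep k0 ((f # ts) @ [y])" by blast
    then show ?thesis using alg_from_dep[OF Fsub k0sub k0F tsF assms(10)] by blast
  qed
  have fg: "\<exists>S::'a set. finite S \<and> gen_subfield S = UNIV" using assms(1) by (simp add: fg_field_def)
  interpret setting ?F f
    by (unfold_locales) (use Fsub nz alg fg in auto)
  show ?thesis using part1 part2 by simp
qed

end
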